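(* Let $(M,d)$ be a complete pointed metric space and let $\mu$ be a positive Radon measure on $\beta\widetilde{M}$. The following are equivalent: (i) $\mu$ is $\preccurlyeq$-minimal; (ii) for every $f\in C(\beta\widetilde{M})$ that is constant on every fibre of $q$, $\int f\,d\mu=\inf\{\int g\,d\mu: g\in G,\ f\le g\}$; (iii) for every upper semicontinuous $f:\beta\widetilde{M}\to\mathbb{R}$ that is constant on every fibre of $q$, $\int_{\beta\widetilde{M}} f\,d\mu=\inf\{\int g\,d\mu: g\in G,\ f\le g\}$; (iv) for every Borel set $A\subset\widetilde{M}^G$ such that $\mu$ is concentrated on $q^{-1}(A)$ and every upper semicontinuous $f:\beta\widetilde{M}\to\mathbb{R}$ that is constant on every fibre of $q$ included in $q^{-1}(A)$, $\int_{\beta\widetilde{M}} f\,d\mu=\inf\{\int g\,d\mu: g\in G,\ f\le g\}$.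
   Context: $\widetilde{M}=\{(x,y)\in M\times M:x\ne y\}$, $\beta\widetilde{M}$ is its Stone–Čech compactification, and Radon measures on $\beta\widetilde{M}$ are identified with $C(\beta\widetilde{M})^*$; for $x\ne y$ in $M$, $d(x,y)$ is the metric and $g(x,y)$ denotes the value of $g\in C(\beta\widetilde{M})$ at $(x,y)\in\widetilde{M}\subset\beta\widetilde{M}$. $G$ is the set of $g\in C(\beta\widetilde{M})$ such that $d(x,y)g(x,y)\le d(x,u)g(x,u)+d(u,y)g(u,y)$ for all distinct $x,u,y\in M$. For positive Radon measures $\mu,\nu$, $\mu\preccurlyeq\nu$ iff $\int g\,d\mu\le\int g\,d\nu$ for all $g\in G$; $\mu$ is $\preccurlyeq$-minimal if every positive $\nu$ with $\nu\preccurlyeq\mu$ satisfies $\mu\preccurlyeq\nu$. Define the equivalence relation $\zeta\sim\omega$ on $\beta\widetilde{M}$ by $g(\zeta)=g(\omega)$ for all $g\in G$; $\widetilde{M}^G=\beta\widetilde{M}/\!\sim$ with the quotient topology (a compact Hausdorff space) and $q:\beta\widetilde{M}\to\widetilde{M}^G$ the quotient map. Throughout, $M$ has at least three distinct points. *)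

theory Defs
  imports "HOL-Analysis.Analysis"
begin

definition Mtilde :: "'a::metric_space set \<Rightarrow> ('a \<times> 'a) set" where
  "Mtilde M = {(x, y). x \<in> M \<and> y \<in> M \<and> x \<noteq> y}"

definition stone_cech :: "'x topology \<Rightarrow> 'b topology \<Rightarrow> ('x \<Rightarrow> 'b) \<Rightarrow> bool" where
  "stone_cech X T e \<longleftrightarrow>
     compact_space T \<and> Hausdorff_space T \<and> embedding_map X T e \<and>
     T closure_of (e ` topspace X) = topspace T \<and>
     (\<forall>f. continuous_map X euclideanreal f \<and> (\<exists>B. \<forall>x\<in>topspace X. \<bar>f x\<bar> \<le> B) \<longrightarrow>
          (\<exists>h. continuous_map T euclideanreal h \<and> (\<forall>x\<in>topspace X. h (e x) = f x)))"

definition Cfun :: "'b topology \<Rightarrow> ('b \<Rightarrow> real) set" where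
  "Cfun T = {g. continuous_map T euclideanreal g}"

definition Gset :: "'a::metric_space set \<Rightarrow> 'b topology \<Rightarrow> ('a \<times> 'a \<Rightarrow> 'b) \<Rightarrow> ('b \<Rightarrow> real) set" where
  "Gset M T e = {g \<in> Cfun T. \<forall>x\<in>M. \<forall>u\<in>M. \<forall>y\<in>M. x \<noteq> u \<and> u \<noteq> y \<and> x \<noteq> y \<longrightarrow>
      dist x y * g (e (x, y)) \<le> dist x u * g (e (x, u)) + dist u y * g (e (u, y))}"

definition borel_sets_of :: "'b topology \<Rightarrow> 'b set set" where
  "borel_sets_of T = sigma_sets (topspace T) {U. openin T U}"

text \<open>Positive Radon measures on a compact Hausdorff space T: finite Borel measures,
  inner regular by compact sets (for finite measures this implies outer regularity).\<close>
definition radon_measure :: "'b topology \<Rightarrow> 'b measure \<Rightarrow> bool" where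
  "radon_measure T \<mu> \<longleftrightarrow>
     space \<mu> = topspace T \<and> sets \<mu> = borel_sets_of T \<and> finite_measure \<mu> \<and>
     (\<forall>A\<in>sets \<mu>. emeasure \<mu> A = (SUP K\<in>{K. compactin T K \<and> K \<subseteq> A}. emeasure \<mu> K))"

definition meas_le :: "'a::metric_space set \<Rightarrow> 'b topology \<Rightarrow> ('a \<times> 'a \<Rightarrow> 'b) \<Rightarrow> 'b measure \<Rightarrow> 'b measure \<Rightarrow> bool" where
  "meas_le M T e \<mu> \<nu> \<longleftrightarrow> (\<forall>g\<in>Gset M T e. integral\<^sup>L \<mu> g \<le> integral\<^sup>L \<nu> g)"

definition meas_minimal :: "'a::metric_space set \<Rightarrow> 'b topology \<Rightarrow> ('a \<times> 'a \<Rightarrow> 'b) \<Rightarrow> 'b measure \<Rightarrow> bool" where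
  "meas_minimal M T e \<mu> \<longleftrightarrow>
     (\<forall>\<nu>. radon_measure T \<nu> \<and> meas_le M T e \<nu> \<mu> \<longrightarrow> meas_le M T e \<mu> \<nu>)"

definition Gequiv :: "'a::metric_space set \<Rightarrow> 'b topology \<Rightarrow> ('a \<times> 'a \<Rightarrow> 'b) \<Rightarrow> 'b \<Rightarrow> 'b \<Rightarrow> bool" where
  "Gequiv M T e \<zeta> \<omega> \<longleftrightarrow> (\<forall>g\<in>Gset M T e. g \<zeta> = g \<omega>)"

definition qmap :: "'a::metric_space set \<Rightarrow> 'b topology \<Rightarrow> ('a \<times> 'a \<Rightarrow> 'b) \<Rightarrow> 'b \<Rightarrow> 'b set" where
  "qmap M T e \<zeta> = {\<omega> \<in> topspace T. Gequiv M T e \<zeta> \<omega>}"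

definition quot_space :: "'a::metric_space set \<Rightarrow> 'b topology \<Rightarrow> ('a \<times> 'a \<Rightarrow> 'b) \<Rightarrow> 'b set set" where
  "quot_space M T e = qmap M T e ` topspace T"

definition quot_open_sets :: "'a::metric_space set \<Rightarrow> 'b topology \<Rightarrow> ('a \<times> 'a \<Rightarrow> 'b) \<Rightarrow> 'b set set set" where
  "quot_open_sets M T e = {U. U \<subseteq> quot_space M T e \<and>
      openin T {\<zeta> \<in> topspace T. qmap M T e \<zeta> \<in> U}}"

definition quot_borel_sets :: "'a::metric_space set \<Rightarrow> 'b topology \<Rightarrow> ('a \<times> 'a \<Rightarrow> 'b) \<Rightarrow> 'b set set set" where
  "quot_borel_sets M T e = sigma_sets (quot_space M T e) (quot_open_sets M T e)"

definition usc_fun :: "'b topology \<Rightarrow> ('b \<Rightarrow> real) \<Rightarrow> bool" where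
  "usc_fun T f \<longleftrightarrow> (\<forall>a. openin T {x \<in> topspace T. f x < a})"

text \<open>Integral of an upper semicontinuous (hence bounded above, Borel) function w.r.t. a
  finite measure, in the extended reals: the usual integral if integrable, otherwise -\<infinity>.\<close>
definition eintegral :: "'b measure \<Rightarrow> ('b \<Rightarrow> real) \<Rightarrow> ereal" where
  "eintegral \<mu> f = (if integrable \<mu> f then ereal (integral\<^sup>L \<mu> f) else -\<infinity>)"

definition upper_G_int :: "'a::metric_space set \<Rightarrow> 'b topology \<Rightarrow> ('a \<times> 'a \<Rightarrow> 'b) \<Rightarrow> 'b measure \<Rightarrow> ('b \<Rightarrow> real) \<Rightarrow> ereal" where
  "upper_G_int M T e \<mu> f =
     Inf {ereal (integral\<^sup>L \<mu> g) | g. g \<in> Gset M T e \<and> (\<forall>x\<in>topspace T. f x \<le> g x)}"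

end

theory Submission
  imports Defs
begin

lemma borel_sets_open: "openin T U \<Longrightarrow> U \<in> borel_sets_of T"
  unfolding borel_sets_of_def by (rule sigma_sets.Basic) simp

lemma borel_sets_closed: "closedin T C \<Longrightarrow> C \<in> borel_sets_of T"
proof -
  assume c: "closedin T C"
  have "topspace T - (topspace T - C) \<in> borel_sets_of T"
    unfolding borel_sets_of_def
    by (rule sigma_sets.Compl, rule sigma_sets.Basic) (use c in \<open>auto simp: closedin_def\<close>)
  moreover have "topspace T - (topspace T - C) = C" using c closedin_subset by blast
  ultimately show ?thesis by simp
qed

lemma borel_sets_top: "topspace T \<in> borel_sets_of T"
  by (rule borel_sets_open) simp

lemma cont_meas:
  assumes "space N = topspace T" "sets N = borel_sets_of T" "continuous_map T euclideanreal g"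
  shows "g \<in> borel_measurable N"
proof (rule borel_measurableI)
  fix S :: "real set" assume "open S"
  have "openin T {x \<in> topspace T. g x \<in> S}"
    using openin_continuous_map_preimage[OF assms(3)] \<open>open S\<close> by simp
  then have "{x \<in> topspace T. g x \<in> S} \<in> borel_sets_of T" by (rule borel_sets_open)
  moreover have "g -` S \<inter> space N = {x \<in> topspace T. g x \<in> S}" using assms(1) by auto
  ultimately show "g -` S \<inter> space N \<in> sets N" using assms(2) by simp
qed

lemma usc_meas:
  assumes "space N = topspace T" "sets N = borel_sets_of T" "usc_fun T f"
  shows "f \<in> borel_measurable N"
proof (rule borel_measurableI_less)
  fix a
  have "{x \<in> topspace T. f x < a} \<in> borel_sets_of T"
    using assms(3) unfolding usc_fun_def by (intro borel_sets_open) auto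
  then show "{w \<in> space N. f w < a} \<in> sets N" using assms by simp
qed

lemma cont_bounded:
  assumes "compact_space T" "continuous_map T euclideanreal g"
  shows "\<exists>B. \<forall>x\<in>topspace T. \<bar>g x\<bar> \<le> B"
proof -
  have "compactin euclideanreal (g ` topspace T)"
    using image_compactin[OF _ assms(2)] assms(1) compact_space_def by blast
  then have "compact (g ` topspace T)" by (simp add: compactin_euclidean_iff)
  then have "bounded (g ` topspace T)" by (rule compact_imp_bounded)
  then show ?thesis by (auto simp: bounded_real)
qed

lemma cont_integrable:
  assumes "finite_measure N" "space N = topspace T" "sets N = borel_sets_of T"
    "compact_space T" "continuous_map T euclideanreal g"
  shows "integrable N g"
proof -
  obtain B where B: "\<forall>x\<in>topspace T. \<bar>g x\<bar> \<le> B" using cont_bounded assms(4,5) by blast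
  show ?thesis
    by (rule finite_measure.integrable_const_bound[OF assms(1), of _ B])
       (use B assms in \<open>auto intro: cont_meas\<close>)
qed

lemma eps_le:
  fixes a b c :: real
  assumes "\<And>\<epsilon>. 0 < \<epsilon> \<Longrightarrow> a \<le> b + \<epsilon> * c" "0 \<le> c"
  shows "a \<le> b"
proof (rule field_le_epsilon)
  fix e :: real assume e: "0 < e"
  have "a \<le> b + (e / (c + 1)) * c" using assms(1)[of "e / (c+1)"] e assms(2) by simp
  also have "(e / (c + 1)) * c \<le> e" using e assms(2) by (simp add: field_simps)
  finally show "a \<le> b + e" by simp
qed

definition admf :: "'b topology \<Rightarrow> 'b set \<Rightarrow> ('b \<Rightarrow> real) set" where
  "admf T U = {h. continuous_map T euclideanreal h \<and> (\<forall>x\<in>topspace T. 0 \<le> h x \<and> h x \<le> 1)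
      \<and> (\<forall>x\<in>topspace T - U. h x = 0)}"

definition lamO :: "'b topology \<Rightarrow> (('b \<Rightarrow> real) \<Rightarrow> real) \<Rightarrow> 'b set \<Rightarrow> real" where
  "lamO T \<phi> U = Sup (\<phi> ` admf T U)"

definition lam :: "'b topology \<Rightarrow> (('b \<Rightarrow> real) \<Rightarrow> real) \<Rightarrow> 'b set \<Rightarrow> real" where
  "lam T \<phi> A = Inf (lamO T \<phi> ` {U. openin T U \<and> A \<subseteq> U})"

locale rz =
  fixes T :: "'b topology" and \<phi> :: "('b \<Rightarrow> real) \<Rightarrow> real"
  assumes cpt: "compact_space T" and haus: "Hausdorff_space T"
    and add: "\<And>f g. continuous_map T euclideanreal f \<Longrightarrow> continuous_map T euclideanreal g \<Longrightarrow>
              \<phi> (\<lambda>x. f x + g x) = \<phi> f + \<phi> g"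
    and scal: "\<And>f c. continuous_map T euclideanreal f \<Longrightarrow> \<phi> (\<lambda>x. c * f x) = c * \<phi> f"
    and pos: "\<And>f. continuous_map T euclideanreal f \<Longrightarrow> (\<forall>x\<in>topspace T. 0 \<le> f x) \<Longrightarrow> 0 \<le> \<phi> f"
begin

abbreviation "\<Omega> \<equiv> topspace T"
abbreviation "CT f \<equiv> continuous_map T euclideanreal f"

lemma phi_diff: "CT f \<Longrightarrow> CT g \<Longrightarrow> \<phi> (\<lambda>x. f x - g x) = \<phi> f - \<phi> g"
proof -
  assume f: "CT f" and g: "CT g"
  have "\<phi> (\<lambda>x. f x - g x) = \<phi> (\<lambda>x. f x + (-1) * g x)" by simp
  also have "\<dots> = \<phi> f + \<phi> (\<lambda>x. (-1) * g x)"
    by (rule add) (use f g in \<open>auto intro: continuous_map_real_mult_left\<close>)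
  also have "\<dots> = \<phi> f - \<phi> g" using scal[OF g, of "-1"] by simp
  finally show ?thesis .
qed

lemma phi_mono: "CT f \<Longrightarrow> CT g \<Longrightarrow> (\<forall>x\<in>\<Omega>. f x \<le> g x) \<Longrightarrow> \<phi> f \<le> \<phi> g"
  using pos[of "\<lambda>x. g x - f x"] phi_diff[of g f] by (auto intro: continuous_map_diff)

lemma phi_cong: "CT f \<Longrightarrow> CT g \<Longrightarrow> (\<forall>x\<in>\<Omega>. f x = g x) \<Longrightarrow> \<phi> f = \<phi> g"
  using phi_mono[of f g] phi_mono[of g f] by auto

lemma phi_zero: "\<phi> (\<lambda>x. 0) = 0"
  using scal[of "\<lambda>x. 0" 0] by simp

lemma phi_const: "\<phi> (\<lambda>x. c) = c * \<phi> (\<lambda>x. 1)"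
  using scal[of "\<lambda>x. 1" c] by simp

lemma phi_one_nonneg: "0 \<le> \<phi> (\<lambda>x. 1)"
  by (rule pos) auto

lemma phi_sum: "finite S \<Longrightarrow> (\<forall>k\<in>S. CT (f k)) \<Longrightarrow> \<phi> (\<lambda>x. \<Sum>k\<in>S. f k x) = (\<Sum>k\<in>S. \<phi> (f k))"
proof (induction S rule: finite_induct)
  case empty then show ?case by (simp add: phi_zero)
next
  case (insert a S)
  have "\<phi> (\<lambda>x. \<Sum>k\<in>insert a S. f k x) = \<phi> (\<lambda>x. f a x + (\<Sum>k\<in>S. f k x))"
    using insert by simp
  also have "\<dots> = \<phi> (f a) + \<phi> (\<lambda>x. \<Sum>k\<in>S. f k x)"
    by (rule add) (use insert in \<open>auto intro!: continuous_map_sum\<close>)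
  finally show ?case using insert by simp
qed

lemma normal: "normal_space T"
  using cpt haus compact_Hausdorff_or_regular_imp_normal_space by blast

lemma adm_zero: "(\<lambda>x. 0) \<in> admf T U"
  by (simp add: admf_def)

lemma adm_le_one: "h \<in> admf T U \<Longrightarrow> \<phi> h \<le> \<phi> (\<lambda>x. 1)"
  by (rule phi_mono) (auto simp: admf_def)

lemma adm_mono: "U \<subseteq> V \<Longrightarrow> admf T U \<subseteq> admf T V"
  by (auto simp: admf_def)

lemma bdd_adm: "bdd_above (\<phi> ` admf T U)"
  using adm_le_one by (auto intro!: bdd_aboveI2)

lemma phi_le_lamO: "h \<in> admf T U \<Longrightarrow> \<phi> h \<le> lamO T \<phi> U"
  unfolding lamO_def using bdd_adm by (intro cSup_upper) auto

lemma lamO_least: "(\<And>h. h \<in> admf T U \<Longrightarrow> \<phi> h \<le> c) \<Longrightarrow> lamO T \<phi> U \<le> c"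
  unfolding lamO_def using adm_zero by (intro cSup_least) auto

lemma lamO_nonneg: "0 \<le> lamO T \<phi> U"
  using phi_le_lamO[OF adm_zero] phi_zero by simp

lemma lamO_le_one: "lamO T \<phi> U \<le> \<phi> (\<lambda>x. 1)"
  by (rule lamO_least) (rule adm_le_one)

lemma lamO_mono: "U \<subseteq> V \<Longrightarrow> lamO T \<phi> U \<le> lamO T \<phi> V"
  by (rule lamO_least, rule phi_le_lamO) (use adm_mono in blast)

lemma lamO_top: "lamO T \<phi> \<Omega> = \<phi> (\<lambda>x. 1)"
  by (rule antisym[OF lamO_le_one], rule phi_le_lamO) (auto simp: admf_def)

lemma lamO_empty: "lamO T \<phi> {} = 0"
proof (rule antisym[OF lamO_least lamO_nonneg])
  fix h assume "h \<in> admf T {}"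
  then have "CT h" "\<forall>x\<in>\<Omega>. h x = 0" by (auto simp: admf_def)
  then show "\<phi> h \<le> 0" using phi_cong[of h "\<lambda>x. 0"] phi_zero by auto
qed

definition shr :: "('b \<Rightarrow> real) \<Rightarrow> real \<Rightarrow> 'b \<Rightarrow> real" where
  "shr h \<epsilon> = (\<lambda>x. max (h x - \<epsilon>) 0)"

lemma shr_cont: "CT h \<Longrightarrow> CT (shr h \<epsilon>)"
  unfolding shr_def by (intro continuous_intros) auto

lemma shr_le: "h \<in> admf T U \<Longrightarrow> 0 < \<epsilon> \<Longrightarrow> \<phi> h \<le> \<phi> (shr h \<epsilon>) + \<epsilon> * \<phi> (\<lambda>x. 1)"
proof -
  assume h: "h \<in> admf T U" and e: "0 < \<epsilon>"
  then have ch: "CT h" by (simp add: admf_def)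
  have "\<phi> h - \<phi> (shr h \<epsilon>) = \<phi> (\<lambda>x. h x - shr h \<epsilon> x)"
    using phi_diff[OF ch shr_cont[OF ch]] by simp
  also have "\<dots> \<le> \<phi> (\<lambda>x. \<epsilon>)"
    by (rule phi_mono) (auto simp: shr_def intro!: continuous_intros ch)
  also have "\<dots> = \<epsilon> * \<phi> (\<lambda>x. 1)" by (rule phi_const)
  finally show ?thesis by simp
qed

lemma shr_closed: "CT h \<Longrightarrow> closedin T {x\<in>\<Omega>. \<epsilon> \<le> h x}"
  using closedin_continuous_map_preimage[of T euclideanreal h "{\<epsilon>..}"] by auto

lemma shr_adm: "h \<in> admf T U \<Longrightarrow> 0 < \<epsilon> \<Longrightarrow> {x\<in>\<Omega>. \<epsilon> \<le> h x} \<subseteq> V \<Longrightarrow> shr h \<epsilon> \<in> admf T V"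
  unfolding admf_def shr_def
  by (auto intro!: continuous_intros)

lemma lamO_Un:
  assumes U: "openin T U" and V: "openin T V"
  shows "lamO T \<phi> (U \<union> V) \<le> lamO T \<phi> U + lamO T \<phi> V"
proof (rule lamO_least)
  fix h assume h: "h \<in> admf T (U \<union> V)"
  then have ch: "CT h" by (simp add: admf_def)
  show "\<phi> h \<le> lamO T \<phi> U + lamO T \<phi> V"
  proof (rule eps_le[OF _ phi_one_nonneg])
    fix \<epsilon> :: real assume e: "0 < \<epsilon>"
    define K where "K = {x\<in>\<Omega>. \<epsilon> \<le> h x}"
    have cK: "closedin T K" unfolding K_def by (rule shr_closed[OF ch])
    have KUV: "K \<subseteq> U \<union> V" using h e unfolding K_def admf_def by force
    have cA: "closedin T (K \<inter> (\<Omega> - V))" using cK V by blast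
    have cB: "closedin T (\<Omega> - U)" using U by blast
    have dj: "disjnt (\<Omega> - U) (K \<inter> (\<Omega> - V))" using KUV by (auto simp: disjnt_def)
    obtain u :: "'b \<Rightarrow> real" where u: "continuous_map T (top_of_set {0..1}) u"
      and u0: "u ` (\<Omega> - U) \<subseteq> {0}" and u1: "u ` (K \<inter> (\<Omega> - V)) \<subseteq> {1}"
      using Urysohn_lemma[OF normal cB cA dj, of 0 1] by auto
    have cu: "CT u" using u continuous_map_in_subtopology by blast
    have u01: "\<forall>x\<in>\<Omega>. 0 \<le> u x \<and> u x \<le> 1"
      using u by (auto simp: continuous_map_def)
    define h1 where "h1 = (\<lambda>x. shr h \<epsilon> x * u x)"
    define h2 where "h2 = (\<lambda>x. shr h \<epsilon> x * (1 - u x))"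
    have c1: "CT h1" unfolding h1_def by (intro continuous_intros shr_cont ch cu)
    have c2: "CT h2" unfolding h2_def by (intro continuous_intros shr_cont ch cu)
    have hle: "\<forall>x\<in>\<Omega>. 0 \<le> h x \<and> h x \<le> 1" using h by (simp add: admf_def)
    have sh01: "\<forall>x\<in>\<Omega>. 0 \<le> shr h \<epsilon> x \<and> shr h \<epsilon> x \<le> 1"
      using hle e by (auto simp: shr_def)
    have "h1 \<in> admf T U"
    proof -
      have "\<forall>x\<in>\<Omega>. 0 \<le> h1 x \<and> h1 x \<le> 1"
        using sh01 u01 unfolding h1_def by (simp add: mult_le_one)
      moreover have "\<forall>x\<in>\<Omega> - U. h1 x = 0" using u0 unfolding h1_def by auto
      ultimately show ?thesis unfolding admf_def using c1 by blast
    qed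
    moreover have "h2 \<in> admf T V"
    proof -
      have "h2 x = 0" if "x \<in> \<Omega> - V" for x
      proof (cases "\<epsilon> \<le> h x")
        case True
        then have "x \<in> K \<inter> (\<Omega> - V)" using that by (auto simp: K_def)
        then have "u x = 1" using u1 by auto
        then show ?thesis by (simp add: h2_def)
      next
        case False then show ?thesis by (simp add: h2_def shr_def)
      qed
      moreover have "\<forall>x\<in>\<Omega>. 0 \<le> h2 x \<and> h2 x \<le> 1"
        using sh01 u01 unfolding h2_def by (simp add: mult_le_one)
      ultimately show ?thesis unfolding admf_def using c2 by blast
    qed
    moreover have "\<phi> (shr h \<epsilon>) = \<phi> h1 + \<phi> h2"
    proof -
      have "shr h \<epsilon> = (\<lambda>x. h1 x + h2 x)" unfolding h1_def h2_def by (rule ext) (simp add: algebra_simps)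
      then show ?thesis using add[OF c1 c2] by simp
    qed
    ultimately have "\<phi> (shr h \<epsilon>) \<le> lamO T \<phi> U + lamO T \<phi> V"
      using phi_le_lamO[of h1 U] phi_le_lamO[of h2 V] by linarith
    then show "\<phi> h \<le> lamO T \<phi> U + lamO T \<phi> V + \<epsilon> * \<phi> (\<lambda>x. 1)"
      using shr_le[OF h e] by simp
  qed
qed


lemma lamO_UN_fin:
  fixes U :: "nat \<Rightarrow> 'b set"
  assumes U: "\<And>i. openin T (U i)"
  shows "lamO T \<phi> (\<Union>i<n. U i) \<le> (\<Sum>i<n. lamO T \<phi> (U i))"
proof (induction n)
  case 0 then show ?case by (simp add: lamO_empty)
next
  case (Suc n)
  have eq: "(\<Union>i<Suc n. U i) = (\<Union>i<n. U i) \<union> U n" by (auto simp: lessThan_Suc)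
  have op: "openin T (\<Union>i<n. U i)" using U by (intro openin_Union) auto
  have "lamO T \<phi> (\<Union>i<Suc n. U i) \<le> lamO T \<phi> (\<Union>i<n. U i) + lamO T \<phi> (U n)"
    unfolding eq by (rule lamO_Un[OF op U])
  then show ?case using Suc by simp
qed

lemma lamO_UN:
  fixes U :: "nat \<Rightarrow> 'b set"
  assumes U: "\<And>i. openin T (U i)" and s: "summable (\<lambda>i. lamO T \<phi> (U i))"
  shows "lamO T \<phi> (\<Union>i. U i) \<le> (\<Sum>i. lamO T \<phi> (U i))"
proof (rule lamO_least)
  fix h assume h: "h \<in> admf T (\<Union>i. U i)"
  then have ch: "CT h" by (simp add: admf_def)
  show "\<phi> h \<le> (\<Sum>i. lamO T \<phi> (U i))"
  proof (rule eps_le[OF _ phi_one_nonneg])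
    fix \<epsilon> :: real assume e: "0 < \<epsilon>"
    define K where "K = {x\<in>\<Omega>. \<epsilon> \<le> h x}"
    have cK: "closedin T K" unfolding K_def by (rule shr_closed[OF ch])
    then have kK: "compactin T K" using cpt closedin_compact_space by blast
    have KU: "K \<subseteq> (\<Union>i. U i)" using h e unfolding K_def admf_def by force
    have "(\<forall>B\<in>range U. openin T B) \<and> K \<subseteq> \<Union>(range U)" using U KU by auto
    then obtain F where F: "finite F" "F \<subseteq> range U" "K \<subseteq> \<Union>F"
      using kK unfolding compactin_def by meson
    obtain C where C: "finite C" "F = U ` C" using finite_subset_image[OF F(1,2)] by blast
    obtain n where n: "C \<subseteq> {..<n}" using finite_nat_bounded[OF C(1)] by blast
    have "K \<subseteq> (\<Union>i<n. U i)" using F(3) C(2) n by auto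
    then have "shr h \<epsilon> \<in> admf T (\<Union>i<n. U i)" using shr_adm[OF h e] K_def by simp
    then have "\<phi> (shr h \<epsilon>) \<le> (\<Sum>i<n. lamO T \<phi> (U i))"
      using phi_le_lamO lamO_UN_fin[OF U, where n=n] by (meson order_trans)
    also have "\<dots> \<le> (\<Sum>i. lamO T \<phi> (U i))"
      by (rule sum_le_suminf[OF s]) (auto simp: lamO_nonneg)
    finally show "\<phi> h \<le> (\<Sum>i. lamO T \<phi> (U i)) + \<epsilon> * \<phi> (\<lambda>x. 1)"
      using shr_le[OF h e] by simp
  qed
qed

lemma bdd_lam: "bdd_below (lamO T \<phi> ` S)"
  by (rule bdd_belowI2[where m=0]) (rule lamO_nonneg)

lemma lam_le_lamO: "openin T U \<Longrightarrow> A \<subseteq> U \<Longrightarrow> lam T \<phi> A \<le> lamO T \<phi> U"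
  unfolding lam_def by (rule cInf_lower[OF _ bdd_lam]) simp

lemma lam_ge:
  assumes A: "A \<subseteq> \<Omega>" and c: "\<And>U. openin T U \<Longrightarrow> A \<subseteq> U \<Longrightarrow> c \<le> lamO T \<phi> U"
  shows "c \<le> lam T \<phi> A"
proof -
  have "\<Omega> \<in> {U. openin T U \<and> A \<subseteq> U}" using A by simp
  then have ne: "lamO T \<phi> ` {U. openin T U \<and> A \<subseteq> U} \<noteq> {}" by blast
  show ?thesis unfolding lam_def
    by (rule cInf_greatest[OF ne]) (use c in blast)
qed

lemma lam_nonneg: "A \<subseteq> \<Omega> \<Longrightarrow> 0 \<le> lam T \<phi> A"
  by (rule lam_ge) (simp_all add: lamO_nonneg)

lemma lam_open: "openin T U \<Longrightarrow> lam T \<phi> U = lamO T \<phi> U"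
proof (rule antisym)
  assume U: "openin T U"
  show "lam T \<phi> U \<le> lamO T \<phi> U" by (rule lam_le_lamO[OF U subset_refl])
  show "lamO T \<phi> U \<le> lam T \<phi> U"
    by (rule lam_ge[OF openin_subset[OF U]]) (rule lamO_mono)
qed

lemma lam_mono: "A \<subseteq> B \<Longrightarrow> B \<subseteq> \<Omega> \<Longrightarrow> lam T \<phi> A \<le> lam T \<phi> B"
proof -
  assume AB: "A \<subseteq> B" and B: "B \<subseteq> \<Omega>"
  show ?thesis
  proof (rule lam_ge[OF B])
    fix U assume "openin T U" "B \<subseteq> U"
    then show "lam T \<phi> A \<le> lamO T \<phi> U" using AB by (intro lam_le_lamO) auto
  qed
qed

lemma lam_empty: "lam T \<phi> {} = 0"
  using lam_le_lamO[of "{}" "{}"] lam_nonneg[of "{}"] lamO_empty by simp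

lemma lam_le_one: "A \<subseteq> \<Omega> \<Longrightarrow> lam T \<phi> A \<le> \<phi> (\<lambda>x. 1)"
  using lam_le_lamO[of \<Omega> A] lamO_top by simp

lemma lam_approx:
  assumes "A \<subseteq> \<Omega>" "0 < \<epsilon>"
  shows "\<exists>U. openin T U \<and> A \<subseteq> U \<and> lamO T \<phi> U < lam T \<phi> A + \<epsilon>"
proof -
  have lt: "Inf (lamO T \<phi> ` {U. openin T U \<and> A \<subseteq> U}) < lam T \<phi> A + \<epsilon>"
    using assms(2) unfolding lam_def by simp
  have "\<Omega> \<in> {U. openin T U \<and> A \<subseteq> U}" using assms by simp
  then have ne: "lamO T \<phi> ` {U. openin T U \<and> A \<subseteq> U} \<noteq> {}" by blast
  obtain y where "y \<in> lamO T \<phi> ` {U. openin T U \<and> A \<subseteq> U}" "y < lam T \<phi> A + \<epsilon>"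
    using cInf_lessD[OF ne lt] by blast
  then show ?thesis by blast
qed

lemma lam_UN:
  assumes A: "\<And>i. A i \<subseteq> \<Omega>" and s: "summable (\<lambda>i. lam T \<phi> (A i))"
  shows "lam T \<phi> (\<Union>i. A i) \<le> (\<Sum>i. lam T \<phi> (A i))"
proof (rule field_le_epsilon)
  fix \<epsilon> :: real assume e: "0 < \<epsilon>"
  have "\<forall>i. \<exists>U. openin T U \<and> A i \<subseteq> U \<and> lamO T \<phi> U < lam T \<phi> (A i) + \<epsilon> * (1/2)^Suc i"
    using lam_approx[OF A] e by simp
  then obtain U where U: "\<And>i. openin T (U i)" "\<And>i. A i \<subseteq> U i"
    "\<And>i. lamO T \<phi> (U i) < lam T \<phi> (A i) + \<epsilon> * (1/2)^Suc i"
    by metis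
  have sg: "(\<lambda>i. \<epsilon> * (1/2)^Suc i) sums \<epsilon>"
    using sums_mult[OF power_half_series, of \<epsilon>] by simp
  have sg2: "(\<lambda>i. lam T \<phi> (A i) + \<epsilon> * (1/2)^Suc i) sums ((\<Sum>i. lam T \<phi> (A i)) + \<epsilon>)"
    by (rule sums_add[OF summable_sums[OF s] sg])
  have sU: "summable (\<lambda>i. lamO T \<phi> (U i))"
    by (rule summable_comparison_test[OF _ sums_summable[OF sg2]])
       (use U(3) lamO_nonneg in \<open>auto intro!: exI[of _ 0] less_imp_le\<close>)
  have "lam T \<phi> (\<Union>i. A i) \<le> lamO T \<phi> (\<Union>i. U i)"
    using U by (intro lam_le_lamO) (auto intro: openin_Union)
  also have "\<dots> \<le> (\<Sum>i. lamO T \<phi> (U i))" by (rule lamO_UN[OF U(1) sU])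
  also have "\<dots> \<le> (\<Sum>i. lam T \<phi> (A i)) + \<epsilon>"
    using suminf_le[OF _ sU sums_summable[OF sg2]] sums_unique[OF sg2] U(3) less_imp_le by metis
  finally show "lam T \<phi> (\<Union>i. A i) \<le> (\<Sum>i. lam T \<phi> (A i)) + \<epsilon>" .
qed

lemma lamO_split:
  assumes U: "openin T U" and V: "openin T V"
  shows "lamO T \<phi> (V \<inter> U) + lam T \<phi> (V - U) \<le> lamO T \<phi> V"
proof -
  have "lamO T \<phi> (V \<inter> U) \<le> lamO T \<phi> V - lam T \<phi> (V - U)"
  proof (rule lamO_least)
    fix h1 assume h1: "h1 \<in> admf T (V \<inter> U)"
    then have ch: "CT h1" by (simp add: admf_def)
    show "\<phi> h1 \<le> lamO T \<phi> V - lam T \<phi> (V - U)"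
    proof (rule eps_le[OF _ phi_one_nonneg])
      fix \<epsilon> :: real assume e: "0 < \<epsilon>"
      define K where "K = {x\<in>\<Omega>. \<epsilon> \<le> h1 x}"
      have cK: "closedin T K" unfolding K_def by (rule shr_closed[OF ch])
      have KVU: "K \<subseteq> V \<inter> U" using h1 e unfolding K_def admf_def by force
      define W where "W = V - K"
      have oW: "openin T W" unfolding W_def using V cK by (rule openin_diff)
      have VUW: "V - U \<subseteq> W" using KVU W_def by auto
      have "lamO T \<phi> W \<le> lamO T \<phi> V - \<phi> (shr h1 \<epsilon>)"
      proof (rule lamO_least)
        fix h2 assume h2: "h2 \<in> admf T W"
        have c2: "CT h2" using h2 by (simp add: admf_def)
        have cs: "CT (shr h1 \<epsilon>)" by (rule shr_cont[OF ch])
        have "(\<lambda>x. shr h1 \<epsilon> x + h2 x) \<in> admf T V"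
        proof -
          have "0 \<le> shr h1 \<epsilon> x + h2 x \<and> shr h1 \<epsilon> x + h2 x \<le> 1" if x: "x \<in> \<Omega>" for x
          proof (cases "\<epsilon> \<le> h1 x")
            case True
            then have "x \<notin> W" using x by (auto simp: W_def K_def)
            then have "h2 x = 0" using h2 x by (auto simp: admf_def)
            then show ?thesis using h1 x e by (auto simp: admf_def shr_def)
          next
            case False
            then show ?thesis using h2 x by (auto simp: admf_def shr_def)
          qed
          moreover have "shr h1 \<epsilon> x + h2 x = 0" if x: "x \<in> \<Omega> - V" for x
          proof -
            have "h1 x = 0" using h1 x by (auto simp: admf_def)
            moreover have "h2 x = 0" using h2 x W_def by (auto simp: admf_def)
            ultimately show ?thesis using e by (simp add: shr_def)
          qed
          moreover have "CT (\<lambda>x. shr h1 \<epsilon> x + h2 x)" by (rule continuous_map_add[OF cs c2])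
          ultimately show ?thesis unfolding admf_def mem_Collect_eq by blast
        qed
        then have "\<phi> (\<lambda>x. shr h1 \<epsilon> x + h2 x) \<le> lamO T \<phi> V" by (rule phi_le_lamO)
        then show "\<phi> h2 \<le> lamO T \<phi> V - \<phi> (shr h1 \<epsilon>)" using add[OF cs c2] by simp
      qed
      moreover have "lam T \<phi> (V - U) \<le> lamO T \<phi> W" by (rule lam_le_lamO[OF oW VUW])
      ultimately show "\<phi> h1 \<le> lamO T \<phi> V - lam T \<phi> (V - U) + \<epsilon> * \<phi> (\<lambda>x. 1)"
        using shr_le[OF h1 e] by simp
    qed
  qed
  then show ?thesis by simp
qed

lemma lam_split_open:
  assumes U: "openin T U" and X: "X \<subseteq> \<Omega>"
  shows "lam T \<phi> (U \<inter> X) + lam T \<phi> ((\<Omega> - U) \<inter> X) = lam T \<phi> X"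
proof (rule antisym)
  show "lam T \<phi> X \<le> lam T \<phi> (U \<inter> X) + lam T \<phi> ((\<Omega> - U) \<inter> X)"
  proof -
    have "lam T \<phi> X - lam T \<phi> ((\<Omega> - U) \<inter> X) \<le> lam T \<phi> (U \<inter> X)"
    proof (rule lam_ge)
      show "U \<inter> X \<subseteq> \<Omega>" using X by auto
    next
      fix W assume W: "openin T W" "U \<inter> X \<subseteq> W"
      have "lam T \<phi> X - lamO T \<phi> W \<le> lam T \<phi> ((\<Omega> - U) \<inter> X)"
      proof (rule lam_ge)
        show "(\<Omega> - U) \<inter> X \<subseteq> \<Omega>" by auto
      next
        fix W2 assume W2: "openin T W2" "(\<Omega> - U) \<inter> X \<subseteq> W2"
        have "lam T \<phi> X \<le> lamO T \<phi> (W \<union> W2)"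
          using W W2 X by (intro lam_le_lamO) auto
        also have "\<dots> \<le> lamO T \<phi> W + lamO T \<phi> W2" by (rule lamO_Un[OF W(1) W2(1)])
        finally show "lam T \<phi> X - lamO T \<phi> W \<le> lamO T \<phi> W2" by simp
      qed
      then show "lam T \<phi> X - lam T \<phi> ((\<Omega> - U) \<inter> X) \<le> lamO T \<phi> W" by simp
    qed
    then show ?thesis by simp
  qed
next
  show "lam T \<phi> (U \<inter> X) + lam T \<phi> ((\<Omega> - U) \<inter> X) \<le> lam T \<phi> X"
  proof (rule lam_ge[OF X])
    fix V assume V: "openin T V" "X \<subseteq> V"
    have "lam T \<phi> (U \<inter> X) \<le> lamO T \<phi> (V \<inter> U)"
      using U V by (intro lam_le_lamO) auto
    moreover have "lam T \<phi> ((\<Omega> - U) \<inter> X) \<le> lam T \<phi> (V - U)"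
      using V openin_subset[OF V(1)] by (intro lam_mono) auto
    ultimately show "lam T \<phi> (U \<inter> X) + lam T \<phi> ((\<Omega> - U) \<inter> X) \<le> lamO T \<phi> V"
      using lamO_split[OF U V(1)] by linarith
  qed
qed


abbreviation "mf \<equiv> (\<lambda>A. ennreal (lam T \<phi> A))"

lemma oms: "outer_measure_space (Pow \<Omega>) mf"
  unfolding outer_measure_space_def
proof (intro conjI)
  show "positive (Pow \<Omega>) mf" by (simp add: positive_def lam_empty)
  show "increasing (Pow \<Omega>) mf"
    unfolding increasing_def by (auto intro!: ennreal_leI lam_mono)
  show "countably_subadditive (Pow \<Omega>) mf"
    unfolding countably_subadditive_def
  proof (intro allI impI)
    fix A :: "nat \<Rightarrow> 'b set" assume A: "range A \<subseteq> Pow \<Omega>"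
    then have A': "\<And>i. A i \<subseteq> \<Omega>" by auto
    show "mf (\<Union>i. A i) \<le> (\<Sum>i. mf (A i))"
    proof (cases "(\<Sum>i. mf (A i)) = top")
      case True then show ?thesis by simp
    next
      case False
      then have sm: "summable (\<lambda>i. lam T \<phi> (A i))"
        using summable_suminf_not_top[of "\<lambda>i. lam T \<phi> (A i)"] lam_nonneg[OF A'] by blast
      have "mf (\<Union>i. A i) \<le> ennreal (\<Sum>i. lam T \<phi> (A i))"
        by (rule ennreal_leI, rule lam_UN[OF A' sm])
      also have "\<dots> = (\<Sum>i. mf (A i))"
        by (rule suminf_ennreal2[symmetric]) (use lam_nonneg[OF A'] sm in auto)
      finally show ?thesis .
    qed
  qed
qed

lemma open_lambda: "openin T U \<Longrightarrow> U \<in> lambda_system \<Omega> (Pow \<Omega>) mf"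
  unfolding lambda_system_def
proof (intro CollectI conjI ballI)
  assume U: "openin T U"
  show "U \<in> Pow \<Omega>" using openin_subset[OF U] by simp
  fix X assume X: "X \<in> Pow \<Omega>"
  have "mf (U \<inter> X) + mf ((\<Omega> - U) \<inter> X) = ennreal (lam T \<phi> (U \<inter> X) + lam T \<phi> ((\<Omega> - U) \<inter> X))"
    using X by (intro ennreal_plus[symmetric] lam_nonneg) auto
  also have "\<dots> = mf X" using lam_split_open[OF U] X by simp
  finally show "mf (U \<inter> X) + mf ((\<Omega> - U) \<inter> X) = mf X" .
qed

lemma ms_borel: "measure_space \<Omega> (borel_sets_of T) mf"
proof -
  have ms1: "measure_space \<Omega> (lambda_system \<Omega> (Pow \<Omega>) mf) mf"
    by (rule sigma_algebra.caratheodory_lemma[OF sigma_algebra_Pow oms])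
  then have sa: "sigma_algebra \<Omega> (lambda_system \<Omega> (Pow \<Omega>) mf)"
    by (simp add: measure_space_def)
  have sub: "borel_sets_of T \<subseteq> lambda_system \<Omega> (Pow \<Omega>) mf"
    unfolding borel_sets_of_def
    by (rule sigma_algebra.sigma_sets_subset[OF sa]) (auto intro: open_lambda)
  have sb: "sigma_algebra \<Omega> (borel_sets_of T)"
    unfolding borel_sets_of_def by (rule sigma_algebra_sigma_sets) (auto dest: openin_subset)
  show ?thesis by (rule measure_down[OF ms1 sb sub])
qed

definition "rmeas = measure_of \<Omega> (borel_sets_of T) mf"

lemma sa_borel: "sigma_algebra \<Omega> (borel_sets_of T)"
  unfolding borel_sets_of_def by (rule sigma_algebra_sigma_sets) (auto dest: openin_subset)

lemma space_rmeas: "space rmeas = \<Omega>"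
  unfolding rmeas_def using sigma_algebra.space_measure_of_eq[OF sa_borel] by simp

lemma sets_rmeas: "sets rmeas = borel_sets_of T"
  unfolding rmeas_def using sigma_algebra.sets_measure_of_eq[OF sa_borel] by simp

lemma emeasure_rmeas: "A \<in> borel_sets_of T \<Longrightarrow> emeasure rmeas A = ennreal (lam T \<phi> A)"
  unfolding rmeas_def
  by (rule emeasure_measure_of_sigma[OF sa_borel _ _]) (use ms_borel in \<open>auto simp: measure_space_def\<close>)

lemma borel_sub: "A \<in> borel_sets_of T \<Longrightarrow> A \<subseteq> \<Omega>"
  unfolding borel_sets_of_def by (rule sigma_sets_into_sp) (auto dest: openin_subset)

lemma measure_rmeas: "A \<in> borel_sets_of T \<Longrightarrow> measure rmeas A = lam T \<phi> A"
  using emeasure_rmeas[of A] lam_nonneg[OF borel_sub] by (simp add: measure_def)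

lemma finite_rmeas: "finite_measure rmeas"
  by (rule finite_measureI) (simp add: space_rmeas emeasure_rmeas borel_sets_top)

lemma measure_open: "openin T U \<Longrightarrow> measure rmeas U = lamO T \<phi> U"
  using measure_rmeas[OF borel_sets_open] lam_open by simp

lemma measure_top: "measure rmeas \<Omega> = \<phi> (\<lambda>x. 1)"
  using measure_open[of \<Omega>] lamO_top by simp


lemma rmeas_inner:
  assumes A: "A \<in> borel_sets_of T"
  shows "emeasure rmeas A = (SUP K\<in>{K. compactin T K \<and> K \<subseteq> A}. emeasure rmeas K)"
proof (rule antisym)
  show "(SUP K\<in>{K. compactin T K \<and> K \<subseteq> A}. emeasure rmeas K) \<le> emeasure rmeas A"
  proof (rule SUP_least)
    fix K assume K: "K \<in> {K. compactin T K \<and> K \<subseteq> A}"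
    then have "closedin T K" using compactin_imp_closedin haus by blast
    then have "K \<in> sets rmeas" by (simp add: sets_rmeas borel_sets_closed)
    then show "emeasure rmeas K \<le> emeasure rmeas A"
      using K A by (intro emeasure_mono) (auto simp: sets_rmeas)
  qed
next
  show "emeasure rmeas A \<le> (SUP K\<in>{K. compactin T K \<and> K \<subseteq> A}. emeasure rmeas K)"
  proof (rule ennreal_le_epsilon)
    fix e :: real assume e: "0 < e"
    have AO: "A \<subseteq> \<Omega>" by (rule borel_sub[OF A])
    have C: "\<Omega> - A \<in> borel_sets_of T"
      using A unfolding borel_sets_of_def by (rule sigma_sets.Compl)
    obtain U where U: "openin T U" "\<Omega> - A \<subseteq> U" "lamO T \<phi> U < lam T \<phi> (\<Omega> - A) + e"
      using lam_approx[of "\<Omega> - A" e] e by auto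
    define K where "K = \<Omega> - U"
    have cK: "closedin T K" unfolding K_def using U(1) by blast
    have kK: "compactin T K" using cK cpt closedin_compact_space by blast
    have KA: "K \<subseteq> A" using U(2) K_def by auto
    have UB: "U \<in> sets rmeas" using U(1) by (simp add: sets_rmeas borel_sets_open)
    have OB: "\<Omega> \<in> sets rmeas" by (simp add: sets_rmeas borel_sets_top)
    have AB: "A \<in> sets rmeas" using A by (simp add: sets_rmeas)
    have mK: "measure rmeas K = measure rmeas \<Omega> - measure rmeas U"
      unfolding K_def using finite_measure.finite_measure_Diff[OF finite_rmeas OB UB] openin_subset[OF U(1)]
      by simp
    have mA: "measure rmeas (\<Omega> - A) = measure rmeas \<Omega> - measure rmeas A"
      using finite_measure.finite_measure_Diff[OF finite_rmeas OB AB] AO by simp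
    have "measure rmeas U < measure rmeas (\<Omega> - A) + e"
      using U(3) measure_open[OF U(1)] measure_rmeas[OF C] by simp
    then have lt: "measure rmeas A < measure rmeas K + e" using mK mA by simp
    have "emeasure rmeas A = ennreal (measure rmeas A)"
      using finite_measure.emeasure_eq_measure[OF finite_rmeas] by simp
    also have "\<dots> \<le> ennreal (measure rmeas K + e)" using lt by (intro ennreal_leI) simp
    also have "\<dots> = emeasure rmeas K + ennreal e"
      using finite_measure.emeasure_eq_measure[OF finite_rmeas] e by (simp add: ennreal_plus)
    also have "\<dots> \<le> (SUP K\<in>{K. compactin T K \<and> K \<subseteq> A}. emeasure rmeas K) + ennreal e"
      using kK KA by (intro add_right_mono SUP_upper) auto
    finally show "emeasure rmeas A \<le> (SUP K\<in>{K. compactin T K \<and> K \<subseteq> A}. emeasure rmeas K) + ennreal e" .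
  qed
qed

lemma radon_rmeas: "radon_measure T rmeas"
  unfolding radon_measure_def using space_rmeas sets_rmeas finite_rmeas rmeas_inner by auto

lemma lam_closed_le:
  assumes K: "closedin T K" and h: "CT h" and h0: "\<forall>x\<in>\<Omega>. 0 \<le> h x" and h1: "\<forall>x\<in>K. 1 \<le> h x"
  shows "lam T \<phi> K \<le> \<phi> h"
proof -
  have KO: "K \<subseteq> \<Omega>" using closedin_subset[OF K] .
  have ph: "0 \<le> \<phi> h" using pos[OF h] h0 by simp
  show ?thesis
  proof (rule eps_le[OF _ lam_nonneg[OF KO]])
    fix \<epsilon> :: real assume e: "0 < \<epsilon>"
    show "lam T \<phi> K \<le> \<phi> h + \<epsilon> * lam T \<phi> K"
    proof (cases "\<epsilon> < 1")
      case False
      then have "lam T \<phi> K \<le> \<epsilon> * lam T \<phi> K"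
        using lam_nonneg[OF KO] by (simp add: mult_le_cancel_right1)
      then show ?thesis using ph by simp
    next
      case True
      define V where "V = {x\<in>\<Omega>. 1 - \<epsilon> < h x}"
      have oV: "openin T V" unfolding V_def
        using openin_continuous_map_preimage[OF h, of "{1-\<epsilon><..}"] by simp
      have KV: "K \<subseteq> V" using KO h1 e unfolding V_def by force
      have "lamO T \<phi> V \<le> (1 / (1 - \<epsilon>)) * \<phi> h"
      proof (rule lamO_least)
        fix h' assume h': "h' \<in> admf T V"
        have "\<phi> h' \<le> \<phi> (\<lambda>x. (1 / (1 - \<epsilon>)) * h x)"
        proof (rule phi_mono)
          show "CT h'" using h' by (simp add: admf_def)
          show "CT (\<lambda>x. (1 / (1 - \<epsilon>)) * h x)" by (intro continuous_map_real_mult_left h)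
          show "\<forall>x\<in>\<Omega>. h' x \<le> 1 / (1 - \<epsilon>) * h x"
          proof
            fix x assume x: "x \<in> \<Omega>"
            show "h' x \<le> 1 / (1 - \<epsilon>) * h x"
            proof (cases "x \<in> V")
              case True
              then have "1 - \<epsilon> < h x" by (simp add: V_def)
              then have "1 \<le> 1 / (1 - \<epsilon>) * h x" using \<open>\<epsilon> < 1\<close> by (simp add: field_simps)
              moreover have "h' x \<le> 1" using h' x by (simp add: admf_def)
              ultimately show ?thesis by linarith
            next
              case False
              then have "h' x = 0" using h' x by (simp add: admf_def)
              then show ?thesis using h0 x \<open>\<epsilon> < 1\<close> by simp
            qed
          qed
        qed
        moreover have "\<phi> (\<lambda>x. (1 / (1 - \<epsilon>)) * h x) = (1 / (1 - \<epsilon>)) * \<phi> h" by (rule scal[OF h])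
        ultimately show "\<phi> h' \<le> 1 / (1 - \<epsilon>) * \<phi> h" by linarith
      qed
      then have "lam T \<phi> K \<le> (1 / (1 - \<epsilon>)) * \<phi> h" using lam_le_lamO[OF oV KV] by simp
      then have "(1 - \<epsilon>) * lam T \<phi> K \<le> \<phi> h" using True by (simp add: field_simps)
      then show ?thesis by (simp add: algebra_simps)
    qed
  qed
qed

lemma layer_sum:
  fixes t \<delta> :: real
  assumes "0 \<le> t" "0 < \<delta>"
  shows "(\<Sum>k<N. min (max (t - real k * \<delta>) 0) \<delta>) = min t (real N * \<delta>)"
proof (induction N)
  case 0 then show ?case using assms by simp
next
  case (Suc N)
  have "(\<Sum>k<Suc N. min (max (t - real k * \<delta>) 0) \<delta>) = min t (real N * \<delta>) + min (max (t - real N * \<delta>) 0) \<delta>"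
    using Suc by simp
  also have "\<dots> = min t (real (Suc N) * \<delta>)"
    using assms by (simp add: min_def max_def algebra_simps)
  finally show ?case .
qed

lemma rint_cont: "CT g \<Longrightarrow> integrable rmeas g"
  by (rule cont_integrable[OF finite_rmeas space_rmeas sets_rmeas cpt])

lemma layer_main:
  assumes g: "CT g" and g0: "\<forall>x\<in>\<Omega>. 0 \<le> g x" and gN: "\<forall>x\<in>\<Omega>. g x \<le> real N * \<delta>" and d: "0 < \<delta>"
  shows "\<bar>integral\<^sup>L rmeas g - \<phi> g\<bar> \<le> \<delta> * measure rmeas \<Omega>"
proof -
  define v where "v = (\<lambda>k x. min (max (g x - real k * \<delta>) 0) \<delta>)"
  have cv: "CT (v k)" for k unfolding v_def by (intro continuous_intros g)
  have gsum: "\<forall>x\<in>\<Omega>. g x = (\<Sum>k<N. v k x)"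
    using layer_sum[OF _ d] g0 gN unfolding v_def by (simp add: min_absorb1)
  have csum: "CT (\<lambda>x. \<Sum>k<N. v k x)" by (intro continuous_map_sum cv) auto
  have phig: "\<phi> g = (\<Sum>k<N. \<phi> (v k))"
    using phi_cong[OF g csum gsum] phi_sum[of "{..<N}" v] cv by simp
  have intg: "integral\<^sup>L rmeas g = (\<Sum>k<N. integral\<^sup>L rmeas (v k))"
  proof -
    have "integral\<^sup>L rmeas g = integral\<^sup>L rmeas (\<lambda>x. \<Sum>k<N. v k x)"
      by (rule Bochner_Integration.integral_cong) (use gsum space_rmeas in auto)
    also have "\<dots> = (\<Sum>k<N. integral\<^sup>L rmeas (v k))"
      by (rule Bochner_Integration.integral_sum) (rule rint_cont[OF cv])
    finally show ?thesis .
  qed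
  define U where "U = (\<lambda>k. {x\<in>\<Omega>. real k * \<delta> < g x})"
  define K where "K = (\<lambda>k. {x\<in>\<Omega>. (real k + 1) * \<delta> \<le> g x})"
  have oU: "openin T (U k)" for k
    unfolding U_def using openin_continuous_map_preimage[OF g, of "{real k * \<delta><..}"] by simp
  have cK: "closedin T (K k)" for k
    unfolding K_def using closedin_continuous_map_preimage[OF g, of "{(real k + 1) * \<delta>..}"] by simp
  have KU: "K k \<subseteq> U k" for k unfolding K_def U_def using d by (auto simp: algebra_simps)
  have UB: "U k \<in> sets rmeas" for k using oU by (simp add: sets_rmeas borel_sets_open)
  have KB: "K k \<in> sets rmeas" for k using cK by (simp add: sets_rmeas borel_sets_closed)
  have vle: "\<forall>x\<in>\<Omega>. v k x \<le> \<delta> * indicator (U k) x" for k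
    using d unfolding v_def U_def by (auto simp: indicator_def)
  have vge: "\<forall>x\<in>\<Omega>. \<delta> * indicator (K k) x \<le> v k x" for k
    using d unfolding v_def K_def by (auto simp: indicator_def algebra_simps)
  have v0: "\<forall>x\<in>\<Omega>. 0 \<le> v k x \<and> v k x \<le> \<delta>" for k using d unfolding v_def by auto
  have bound: "\<bar>integral\<^sup>L rmeas (v k) - \<phi> (v k)\<bar> \<le> \<delta> * measure rmeas (U k - K k)" for k
  proof -
    have intU: "integrable rmeas (indicator (U k) :: 'b \<Rightarrow> real)"
      using UB finite_measure.emeasure_finite[OF finite_rmeas] by (intro integrable_real_indicator) (auto simp: top.not_eq_extremum)
    have intK: "integrable rmeas (indicator (K k) :: 'b \<Rightarrow> real)"
      using KB finite_measure.emeasure_finite[OF finite_rmeas] by (intro integrable_real_indicator) (auto simp: top.not_eq_extremum)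
    have i1: "integral\<^sup>L rmeas (v k) \<le> \<delta> * measure rmeas (U k)"
    proof -
      have "integral\<^sup>L rmeas (v k) \<le> integral\<^sup>L rmeas (\<lambda>x. \<delta> * indicator (U k) x)"
        by (rule integral_mono[OF rint_cont[OF cv]]) (use intU vle space_rmeas in auto)
      also have "\<dots> = \<delta> * measure rmeas (U k)"
        using UB by (simp add: Int_absorb2 sets.sets_into_space)
      finally show ?thesis .
    qed
    have i2: "\<delta> * measure rmeas (K k) \<le> integral\<^sup>L rmeas (v k)"
    proof -
      have "\<delta> * measure rmeas (K k) = integral\<^sup>L rmeas (\<lambda>x. \<delta> * indicator (K k) x)"
        using KB by (simp add: Int_absorb2 sets.sets_into_space)
      also have "\<dots> \<le> integral\<^sup>L rmeas (v k)"
        by (rule integral_mono[OF _ rint_cont[OF cv]]) (use intK vge space_rmeas in auto)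
      finally show ?thesis .
    qed
    have cw: "CT (\<lambda>x. (1 / \<delta>) * v k x)" by (intro continuous_map_real_mult_left cv)
    have vd: "v k = (\<lambda>x. \<delta> * ((1 / \<delta>) * v k x))" using d by (auto simp: fun_eq_iff)
    have pv: "\<phi> (v k) = \<delta> * \<phi> (\<lambda>x. (1 / \<delta>) * v k x)"
      by (subst vd, rule scal[OF cw])
    have adm: "(\<lambda>x. (1 / \<delta>) * v k x) \<in> admf T (U k)"
      unfolding admf_def using cw v0 d
      by (auto simp: v_def U_def field_simps)
    have p1: "\<phi> (v k) \<le> \<delta> * measure rmeas (U k)"
      using phi_le_lamO[OF adm] measure_open[OF oU] pv d by simp
    have p2: "\<delta> * measure rmeas (K k) \<le> \<phi> (v k)"
    proof -
      have "lam T \<phi> (K k) \<le> \<phi> (\<lambda>x. (1 / \<delta>) * v k x)"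
        by (rule lam_closed_le[OF cK cw]) (use v0 d in \<open>auto simp: v_def K_def algebra_simps\<close>)
      then show ?thesis using measure_rmeas[OF borel_sets_closed[OF cK]] pv d by simp
    qed
    have "measure rmeas (U k - K k) = measure rmeas (U k) - measure rmeas (K k)"
      using finite_measure.finite_measure_Diff[OF finite_rmeas UB KB KU] .
    then have "\<delta> * measure rmeas (U k - K k) = \<delta> * measure rmeas (U k) - \<delta> * measure rmeas (K k)"
      by (simp add: right_diff_distrib)
    then show ?thesis unfolding abs_le_iff using i1 i2 p1 p2 by linarith
  qed
  have disj: "disjoint_family_on (\<lambda>k. U k - K k) {..<N}"
    unfolding disjoint_family_on_def
  proof (intro ballI impI)
    fix k k' assume "k \<in> {..<N}" "k' \<in> {..<N}" "k \<noteq> k'"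
    show "(U k - K k) \<inter> (U k' - K k') = {}"
    proof (rule ccontr)
      assume "(U k - K k) \<inter> (U k' - K k') \<noteq> {}"
      then obtain x where "x \<in> (U k - K k) \<inter> (U k' - K k')" by blast
      then have x: "x \<in> \<Omega>" "real k * \<delta> < g x" "g x < (real k + 1) * \<delta>"
        "real k' * \<delta> < g x" "g x < (real k' + 1) * \<delta>"
        unfolding U_def K_def by (auto simp: not_le)
      have "k < k' \<or> k' < k" using \<open>k \<noteq> k'\<close> by arith
      then show False
      proof
        assume "k < k'"
        then have "(real k + 1) * \<delta> \<le> real k' * \<delta>" using d by (intro mult_right_mono) auto
        then show False using x by simp
      next
        assume "k' < k"
        then have "(real k' + 1) * \<delta> \<le> real k * \<delta>" using d by (intro mult_right_mono) auto
        then show False using x by simp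
      qed
    qed
  qed
  have "(\<Sum>k<N. measure rmeas (U k - K k)) = measure rmeas (\<Union>k<N. U k - K k)"
  proof -
    have "(\<lambda>k. U k - K k) ` {..<N} \<subseteq> sets rmeas" using UB KB by blast
    from finite_measure.finite_measure_finite_Union[OF finite_rmeas _ this disj]
    show ?thesis by simp
  qed
  also have "\<dots> \<le> measure rmeas \<Omega>"
    using UB KB space_rmeas
    by (intro finite_measure.finite_measure_mono[OF finite_rmeas]) (auto simp: sets_rmeas borel_sets_top U_def)
  finally have sm: "(\<Sum>k<N. measure rmeas (U k - K k)) \<le> measure rmeas \<Omega>" .
  have "\<bar>integral\<^sup>L rmeas g - \<phi> g\<bar> = \<bar>\<Sum>k<N. (integral\<^sup>L rmeas (v k) - \<phi> (v k))\<bar>"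
    by (simp add: intg phig sum_subtractf)
  also have "\<dots> \<le> (\<Sum>k<N. \<bar>integral\<^sup>L rmeas (v k) - \<phi> (v k)\<bar>)" by (rule sum_abs)
  also have "\<dots> \<le> (\<Sum>k<N. \<delta> * measure rmeas (U k - K k))" by (rule sum_mono) (rule bound)
  also have "\<dots> = \<delta> * (\<Sum>k<N. measure rmeas (U k - K k))" by (simp add: sum_distrib_left)
  also have "\<dots> \<le> \<delta> * measure rmeas \<Omega>" using sm d by simp
  finally show ?thesis .
qed

lemma rmeas_integral:
  assumes g: "CT g"
  shows "integral\<^sup>L rmeas g = \<phi> g"
proof -
  obtain B0 where B0: "\<forall>x\<in>\<Omega>. \<bar>g x\<bar> \<le> B0" using cont_bounded[OF cpt g] by blast
  define B where "B = max B0 0"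
  have B: "\<forall>x\<in>\<Omega>. \<bar>g x\<bar> \<le> B" "0 \<le> B" using B0 unfolding B_def by force+
  define g' where "g' = (\<lambda>x. g x + B)"
  have cg': "CT g'" unfolding g'_def by (intro continuous_intros g)
  have mO: "0 \<le> measure rmeas \<Omega>" by simp
  have key: "\<bar>integral\<^sup>L rmeas g' - \<phi> g'\<bar> \<le> \<delta> * measure rmeas \<Omega>" if d: "0 < \<delta>" for \<delta>
  proof -
    define N where "N = nat \<lceil>2 * B / \<delta>\<rceil>"
    have "2 * B / \<delta> \<le> real N" unfolding N_def by linarith
    then have "2 * B \<le> real N * \<delta>" using d by (simp add: field_simps)
    then have "\<forall>x\<in>\<Omega>. g' x \<le> real N * \<delta>" using B unfolding g'_def by (smt (verit))
    moreover have "\<forall>x\<in>\<Omega>. 0 \<le> g' x" using B unfolding g'_def by (smt (verit))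
    ultimately show ?thesis using layer_main[OF cg' _ _ d] by blast
  qed
  have ig: "integral\<^sup>L rmeas g' = integral\<^sup>L rmeas g + B * measure rmeas \<Omega>"
  proof -
    have "integral\<^sup>L rmeas (\<lambda>x. g x + B) = integral\<^sup>L rmeas g + integral\<^sup>L rmeas (\<lambda>x. B)"
      by (rule Bochner_Integration.integral_add[OF rint_cont[OF g]])
         (rule finite_measure.integrable_const[OF finite_rmeas])
    then show ?thesis unfolding g'_def using space_rmeas by simp
  qed
  have pg: "\<phi> g' = \<phi> g + B * measure rmeas \<Omega>"
    unfolding g'_def using add[OF g, of "\<lambda>x. B"] phi_const[of B] measure_top by simp
  have "\<bar>integral\<^sup>L rmeas g - \<phi> g\<bar> \<le> 0"
  proof (rule eps_le[OF _ mO])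
    fix \<epsilon> :: real assume "0 < \<epsilon>"
    then show "\<bar>integral\<^sup>L rmeas g - \<phi> g\<bar> \<le> 0 + \<epsilon> * measure rmeas \<Omega>"
      using key[of \<epsilon>] ig pg by simp
  qed
  then show ?thesis by simp
qed

lemma riesz_main: "\<exists>\<nu>. radon_measure T \<nu> \<and> (\<forall>g. CT g \<longrightarrow> integral\<^sup>L \<nu> g = \<phi> g)"
  using radon_rmeas rmeas_integral by blast

end

definition fadd :: "('b \<Rightarrow> real) \<Rightarrow> ('b \<Rightarrow> real) \<Rightarrow> 'b \<Rightarrow> real" where
  "fadd f g = (\<lambda>x. f x + g x)"
definition fsc :: "real \<Rightarrow> ('b \<Rightarrow> real) \<Rightarrow> 'b \<Rightarrow> real" where
  "fsc c f = (\<lambda>x. c * f x)"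

locale hb =
  fixes V :: "('b \<Rightarrow> real) set" and p :: "('b \<Rightarrow> real) \<Rightarrow> real"
  assumes Vz: "(\<lambda>x. 0) \<in> V"
    and Vadd: "\<And>f g. f \<in> V \<Longrightarrow> g \<in> V \<Longrightarrow> fadd f g \<in> V"
    and Vsc: "\<And>f c. f \<in> V \<Longrightarrow> fsc c f \<in> V"
    and psub: "\<And>f g. f \<in> V \<Longrightarrow> g \<in> V \<Longrightarrow> p (fadd f g) \<le> p f + p g"
    and phom: "\<And>f c. f \<in> V \<Longrightarrow> 0 < c \<Longrightarrow> p (fsc c f) = c * p f"
begin

definition good :: "(('b \<Rightarrow> real) \<times> real) set \<Rightarrow> bool" where
  "good H \<longleftrightarrow> (\<forall>a\<in>H. \<forall>b\<in>H. fst a = fst b \<longrightarrow> snd a = snd b) \<and>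
     (\<forall>a\<in>H. fst a \<in> V \<and> snd a \<le> p (fst a)) \<and> ((\<lambda>x. 0), 0) \<in> H \<and>
     (\<forall>a\<in>H. \<forall>b\<in>H. (fadd (fst a) (fst b), snd a + snd b) \<in> H) \<and>
     (\<forall>a\<in>H. \<forall>c. (fsc c (fst a), c * snd a) \<in> H)"

definition ext :: "(('b \<Rightarrow> real) \<times> real) set \<Rightarrow> ('b \<Rightarrow> real) \<Rightarrow> real \<Rightarrow> (('b \<Rightarrow> real) \<times> real) set" where
  "ext H x c = {(fadd (fst a) (fsc t x), snd a + t * c) | a t. a \<in> H}"

lemma p0: "p (\<lambda>x. 0) = 0"
proof -
  have "p (fsc 2 (\<lambda>x. 0)) = 2 * p (\<lambda>x. 0)" by (rule phom[OF Vz]) simp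
  moreover have "fsc 2 (\<lambda>x. 0) = ((\<lambda>x. 0) :: 'b \<Rightarrow> real)" by (simp add: fsc_def)
  ultimately have "p (\<lambda>x. 0) = 2 * p (\<lambda>x. 0)" by metis
  then show ?thesis by linarith
qed

lemma fadd_fsc_simps:
  "fadd f (fsc 0 x) = f" "fadd (\<lambda>x. 0) g = g" "fsc c (\<lambda>x. 0) = (\<lambda>x. 0)" "fadd f (\<lambda>x. 0) = f"
  by (auto simp: fadd_def fsc_def)

lemma ext_good:
  assumes H: "good H" and x: "x \<in> V" and xn: "x \<notin> fst ` H"
    and lo: "\<forall>a\<in>H. snd a - p (fadd (fst a) (fsc (-1) x)) \<le> c"
    and up: "\<forall>a\<in>H. c \<le> p (fadd (fst a) x) - snd a"
  shows "good (ext H x c)" "H \<subseteq> ext H x c" "x \<in> fst ` ext H x c"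
proof -
  have Hf: "\<And>a b. a \<in> H \<Longrightarrow> b \<in> H \<Longrightarrow> fst a = fst b \<Longrightarrow> snd a = snd b"
    and HV: "\<And>a. a \<in> H \<Longrightarrow> fst a \<in> V" and Hp: "\<And>a. a \<in> H \<Longrightarrow> snd a \<le> p (fst a)"
    and H0: "((\<lambda>x. 0), 0) \<in> H"
    and Ha: "\<And>a b. a \<in> H \<Longrightarrow> b \<in> H \<Longrightarrow> (fadd (fst a) (fst b), snd a + snd b) \<in> H"
    and Hs: "\<And>a c. a \<in> H \<Longrightarrow> (fsc c (fst a), c * snd a) \<in> H"
    using H unfolding good_def by blast+
  show sub: "H \<subseteq> ext H x c"
  proof
    fix a assume "a \<in> H"
    then have "(fadd (fst a) (fsc 0 x), snd a + 0 * c) \<in> ext H x c" unfolding ext_def by blast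
    then show "a \<in> ext H x c" by (simp add: fadd_fsc_simps)
  qed
  show "x \<in> fst ` ext H x c"
  proof -
    have "(fadd (\<lambda>x. 0) (fsc 1 x), 0 + 1 * c) \<in> ext H x c" unfolding ext_def using H0 by force
    moreover have "fadd (\<lambda>x. 0) (fsc 1 x) = x" by (auto simp: fadd_def fsc_def)
    ultimately show ?thesis by force
  qed
  have uniq: "s = s' \<and> t = t'" if a: "(s, y) \<in> H" "(s', y') \<in> H" and eq: "fadd s (fsc t x) = fadd s' (fsc t' x)" for s y s' y' t t'
  proof -
    have tt: "t = t'"
    proof (rule ccontr)
      assume ne: "t \<noteq> t'"
      have mem: "(fadd s' (fsc (-1) s), y' + (-1) * y) \<in> H"
        using Ha[OF a(2) Hs[OF a(1), of "-1"]] by simp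
      have "(fsc (1 / (t - t')) (fadd s' (fsc (-1) s)), (1 / (t - t')) * (y' + (-1) * y)) \<in> H"
        using Hs[OF mem, of "1 / (t - t')"] by simp
      moreover have "fsc (1 / (t - t')) (fadd s' (fsc (-1) s)) = x"
      proof
        fix z
        have "s z + t * x z = s' z + t' * x z" using fun_cong[OF eq, of z] by (simp add: fadd_def fsc_def)
        then have "(t - t') * x z = s' z - s z" by (simp add: algebra_simps)
        then show "fsc (1 / (t - t')) (fadd s' (fsc (-1) s)) z = x z"
          using ne by (simp add: fadd_def fsc_def field_simps)
      qed
      ultimately have "x \<in> fst ` H" by force
      then show False using xn by simp
    qed
    moreover have "s = s'"
    proof
      fix z show "s z = s' z" using fun_cong[OF eq, of z] tt by (simp add: fadd_def fsc_def)
    qed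
    ultimately show ?thesis by simp
  qed
  show "good (ext H x c)"
    unfolding good_def
  proof (intro conjI ballI allI impI)
    fix a b assume a: "a \<in> ext H x c" and b: "b \<in> ext H x c" and eq: "fst a = fst b"
    from a obtain a' t where a': "a' \<in> H" "a = (fadd (fst a') (fsc t x), snd a' + t * c)" unfolding ext_def by blast
    from b obtain b' t' where b': "b' \<in> H" "b = (fadd (fst b') (fsc t' x), snd b' + t' * c)" unfolding ext_def by blast
    have "fst a' = fst b' \<and> t = t'" using uniq[of "fst a'" "snd a'" "fst b'" "snd b'" t t'] a' b' eq by simp
    then show "snd a = snd b" using Hf[OF a'(1) b'(1)] a' b' by simp
  next
    fix a assume a: "a \<in> ext H x c"
    from a obtain a' t where a': "a' \<in> H" "a = (fadd (fst a') (fsc t x), snd a' + t * c)" unfolding ext_def by blast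
    show "fst a \<in> V" using a' HV Vadd Vsc x by simp
    show "snd a \<le> p (fst a)"
    proof -
      consider "t = 0" | "t > 0" | "t < 0" by arith
      then show ?thesis
      proof cases
        case 1 then show ?thesis using a' Hp by (simp add: fadd_fsc_simps)
      next
        case 2
        have m: "(fsc (1/t) (fst a'), (1/t) * snd a') \<in> H" using Hs[OF a'(1)] .
        have "c \<le> p (fadd (fsc (1/t) (fst a')) x) - (1/t) * snd a'" using up m by fastforce
        then have "t * c \<le> t * (p (fadd (fsc (1/t) (fst a')) x) - (1/t) * snd a')" using 2
          by (intro mult_left_mono) auto
        also have "\<dots> = t * p (fadd (fsc (1/t) (fst a')) x) - snd a'" using 2
          by (simp add: right_diff_distrib)
        also have "t * p (fadd (fsc (1/t) (fst a')) x) = p (fsc t (fadd (fsc (1/t) (fst a')) x))"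
          by (rule phom[symmetric]) (use 2 HV[OF m] Vadd x in auto)
        also have "fsc t (fadd (fsc (1/t) (fst a')) x) = fadd (fst a') (fsc t x)"
          using 2 by (auto simp: fadd_def fsc_def fun_eq_iff field_simps)
        finally show ?thesis using a' by simp
      next
        case 3
        define r where "r = - t"
        have r: "0 < r" using 3 r_def by simp
        have m: "(fsc (1/r) (fst a'), (1/r) * snd a') \<in> H" using Hs[OF a'(1)] .
        have "(1/r) * snd a' - p (fadd (fsc (1/r) (fst a')) (fsc (-1) x)) \<le> c" using lo m by fastforce
        then have "r * ((1/r) * snd a' - p (fadd (fsc (1/r) (fst a')) (fsc (-1) x))) \<le> r * c" using r
          by (intro mult_left_mono) auto
        then have "snd a' - r * p (fadd (fsc (1/r) (fst a')) (fsc (-1) x)) \<le> r * c" using r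
          by (simp add: right_diff_distrib)
        also have "r * p (fadd (fsc (1/r) (fst a')) (fsc (-1) x)) = p (fsc r (fadd (fsc (1/r) (fst a')) (fsc (-1) x)))"
          by (rule phom[symmetric]) (use r HV[OF m] Vadd Vsc x in auto)
        also have "fsc r (fadd (fsc (1/r) (fst a')) (fsc (-1) x)) = fadd (fst a') (fsc t x)"
          using r unfolding r_def by (auto simp: fadd_def fsc_def fun_eq_iff field_simps)
        finally show ?thesis using a' r_def by simp
      qed
    qed
  next
    show "((\<lambda>x. 0), 0) \<in> ext H x c" using sub H0 by blast
  next
    fix a b assume a: "a \<in> ext H x c" and b: "b \<in> ext H x c"
    from a obtain a' t where a': "a' \<in> H" "a = (fadd (fst a') (fsc t x), snd a' + t * c)" unfolding ext_def by blast
    from b obtain b' t' where b': "b' \<in> H" "b = (fadd (fst b') (fsc t' x), snd b' + t' * c)" unfolding ext_def by blast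
    have "(fadd (fst (fadd (fst a') (fst b'), snd a' + snd b')) (fsc (t + t') x),
           snd (fadd (fst a') (fst b'), snd a' + snd b') + (t + t') * c) \<in> ext H x c"
      unfolding ext_def using Ha[OF a'(1) b'(1)] by blast
    moreover have "fadd (fst (fadd (fst a') (fst b'), snd a' + snd b')) (fsc (t + t') x) = fadd (fst a) (fst b)"
      using a' b' by (auto simp: fadd_def fsc_def algebra_simps)
    moreover have "snd (fadd (fst a') (fst b'), snd a' + snd b') + (t + t') * c = snd a + snd b"
      using a' b' by (simp add: algebra_simps)
    ultimately show "(fadd (fst a) (fst b), snd a + snd b) \<in> ext H x c" by simp
  next
    fix a d assume a: "a \<in> ext H x c"
    from a obtain a' t where a': "a' \<in> H" "a = (fadd (fst a') (fsc t x), snd a' + t * c)" unfolding ext_def by blast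
    have "(fadd (fst (fsc d (fst a'), d * snd a')) (fsc (d * t) x), snd (fsc d (fst a'), d * snd a') + (d * t) * c) \<in> ext H x c"
      unfolding ext_def using Hs[OF a'(1)] by blast
    moreover have "fadd (fst (fsc d (fst a'), d * snd a')) (fsc (d * t) x) = fsc d (fst a)"
      using a' by (auto simp: fadd_def fsc_def algebra_simps)
    moreover have "snd (fsc d (fst a'), d * snd a') + (d * t) * c = d * snd a"
      using a' by (simp add: algebra_simps)
    ultimately show "(fsc d (fst a), d * snd a) \<in> ext H x c" by simp
  qed
qed


lemma goodD:
  assumes "good H"
  shows "\<And>a b. a \<in> H \<Longrightarrow> b \<in> H \<Longrightarrow> fst a = fst b \<Longrightarrow> snd a = snd b"
    and "\<And>a. a \<in> H \<Longrightarrow> fst a \<in> V" and "\<And>a. a \<in> H \<Longrightarrow> snd a \<le> p (fst a)"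
    and "((\<lambda>x. 0), 0) \<in> H"
    and "\<And>a b. a \<in> H \<Longrightarrow> b \<in> H \<Longrightarrow> (fadd (fst a) (fst b), snd a + snd b) \<in> H"
    and "\<And>a c. a \<in> H \<Longrightarrow> (fsc c (fst a), c * snd a) \<in> H"
  using assms unfolding good_def by blast+

lemma sup_bound:
  assumes H: "good H" and x: "x \<in> V"
  shows "\<exists>c. (\<forall>a\<in>H. snd a - p (fadd (fst a) (fsc (-1) x)) \<le> c) \<and> (\<forall>a\<in>H. c \<le> p (fadd (fst a) x) - snd a)"
proof -
  define S where "S = (\<lambda>a. snd a - p (fadd (fst a) (fsc (-1) x))) ` H"
  have bnd: "snd a1 - p (fadd (fst a1) (fsc (-1) x)) \<le> p (fadd (fst a2) x) - snd a2"
    if a1: "a1 \<in> H" and a2: "a2 \<in> H" for a1 a2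
  proof -
    have "snd a1 + snd a2 \<le> p (fadd (fst a1) (fst a2))"
      using goodD(3)[OF H goodD(5)[OF H a1 a2]] by simp
    also have "fadd (fst a1) (fst a2) = fadd (fadd (fst a1) (fsc (-1) x)) (fadd (fst a2) x)"
      by (auto simp: fadd_def fsc_def)
    also have "p \<dots> \<le> p (fadd (fst a1) (fsc (-1) x)) + p (fadd (fst a2) x)"
      using goodD(2)[OF H a1] goodD(2)[OF H a2] x by (intro psub Vadd Vsc) auto
    finally show ?thesis by simp
  qed
  have H0: "((\<lambda>x. 0), 0) \<in> H" by (rule goodD(4)[OF H])
  have ne: "S \<noteq> {}" using H0 unfolding S_def by blast
  have bdd: "bdd_above S" unfolding S_def
    using bnd[OF _ H0] by (intro bdd_aboveI2) auto
  show ?thesis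
  proof (intro exI conjI ballI)
    fix a assume "a \<in> H"
    then show "snd a - p (fadd (fst a) (fsc (-1) x)) \<le> Sup S"
      using bdd unfolding S_def by (intro cSup_upper) auto
  next
    fix a assume a: "a \<in> H"
    show "Sup S \<le> p (fadd (fst a) x) - snd a"
      by (rule cSup_least[OF ne]) (use bnd a in \<open>auto simp: S_def\<close>)
  qed
qed

lemma good_chain:
  assumes C: "C \<noteq> {}" "\<forall>H\<in>C. good H" "chain\<^sub>\<subseteq> C"
  shows "good (\<Union>C)"
proof -
  have common: "\<exists>H\<in>C. a \<in> H \<and> b \<in> H" if ab: "a \<in> \<Union>C" "b \<in> \<Union>C" for a b
  proof -
    obtain H1 H2 where "H1 \<in> C" "H2 \<in> C" "a \<in> H1" "b \<in> H2" using ab by blast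
    then show ?thesis using C(3) unfolding chain_subset_def by blast
  qed
  have gH: "good H" if "H \<in> C" for H using C(2) that by blast
  show ?thesis unfolding good_def
  proof (intro conjI ballI allI impI)
    fix a b assume ab: "a \<in> \<Union>C" "b \<in> \<Union>C" and eq: "fst a = fst b"
    obtain H where H: "H \<in> C" "a \<in> H" "b \<in> H" using common[OF ab] by blast
    show "snd a = snd b" by (rule goodD(1)[OF gH[OF H(1)] H(2,3) eq])
  next
    fix a assume "a \<in> \<Union>C"
    then obtain H where H: "H \<in> C" "a \<in> H" by blast
    show "fst a \<in> V" by (rule goodD(2)[OF gH[OF H(1)] H(2)])
    show "snd a \<le> p (fst a)" by (rule goodD(3)[OF gH[OF H(1)] H(2)])
  next
    obtain H where H: "H \<in> C" using C(1) by blast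
    show "((\<lambda>x. 0), 0) \<in> \<Union>C" using goodD(4)[OF gH[OF H]] H by blast
  next
    fix a b assume ab: "a \<in> \<Union>C" "b \<in> \<Union>C"
    obtain H where H: "H \<in> C" "a \<in> H" "b \<in> H" using common[OF ab] by blast
    show "(fadd (fst a) (fst b), snd a + snd b) \<in> \<Union>C"
      using goodD(5)[OF gH[OF H(1)] H(2,3)] H(1) by blast
  next
    fix a c assume "a \<in> \<Union>C"
    then obtain H where H: "H \<in> C" "a \<in> H" by blast
    show "(fsc c (fst a), c * snd a) \<in> \<Union>C" using goodD(6)[OF gH[OF H(1)] H(2)] H(1) by blast
  qed
qed

lemma good_base: "good {((\<lambda>x. 0), 0)}"
  unfolding good_def using Vz p0 by (auto simp: fadd_fsc_simps)

theorem hahn_banach: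
  assumes f0: "f0 \<in> V"
  shows "\<exists>\<phi>. (\<forall>f\<in>V. \<forall>g\<in>V. \<phi> (fadd f g) = \<phi> f + \<phi> g) \<and> (\<forall>f\<in>V. \<forall>c. \<phi> (fsc c f) = c * \<phi> f)
           \<and> (\<forall>f\<in>V. \<phi> f \<le> p f) \<and> \<phi> f0 = p f0"
proof -
  obtain H0 where H0: "good H0" "(f0, p f0) \<in> H0"
  proof (cases "f0 = (\<lambda>x. 0)")
    case True
    show ?thesis by (rule that[OF good_base]) (simp add: True p0)
  next
    case False
    have nd: "f0 \<notin> fst ` {((\<lambda>x. 0), 0)}" using False by auto
    have lo: "\<forall>a\<in>{((\<lambda>x. 0), 0)}. snd a - p (fadd (fst a) (fsc (-1) f0)) \<le> p f0"
    proof -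
      have "p (fadd (fsc (-1) f0) f0) \<le> p (fsc (-1) f0) + p f0"
        using f0 by (intro psub Vsc)
      moreover have "fadd (fsc (-1) f0) f0 = (\<lambda>x. 0)" by (auto simp: fadd_def fsc_def)
      ultimately show ?thesis using p0 by (simp add: fadd_fsc_simps)
    qed
    have up: "\<forall>a\<in>{((\<lambda>x. 0), 0)}. p f0 \<le> p (fadd (fst a) f0) - snd a" by (simp add: fadd_fsc_simps)
    note E = ext_good[OF good_base f0 nd lo up]
    have "(fadd (\<lambda>x. 0) (fsc 1 f0), 0 + 1 * p f0) \<in> ext {((\<lambda>x. 0), 0)} f0 (p f0)"
      unfolding ext_def by (rule CollectI, rule exI[of _ "((\<lambda>x. 0), 0)"], rule exI[of _ 1]) simp
    moreover have "fadd (\<lambda>x. 0) (fsc 1 f0) = f0" by (auto simp: fadd_def fsc_def)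
    ultimately have "(f0, p f0) \<in> ext {((\<lambda>x. 0), 0)} f0 (p f0)" by simp
    then show ?thesis by (rule that[OF E(1)])
  qed
  define A where "A = {H. good H \<and> H0 \<subseteq> H}"
  have "\<forall>C\<in>chains A. \<exists>U\<in>A. \<forall>X\<in>C. X \<subseteq> U"
  proof
    fix C assume C: "C \<in> chains A"
    show "\<exists>U\<in>A. \<forall>X\<in>C. X \<subseteq> U"
    proof (cases "C = {}")
      case True then show ?thesis using H0 A_def by auto
    next
      case False
      have "good (\<Union>C)" using C False unfolding chains_def A_def by (intro good_chain) auto
      moreover have "H0 \<subseteq> \<Union>C" using C False unfolding chains_def A_def by auto
      ultimately show ?thesis unfolding A_def by blast
    qed
  qed
  then obtain M where M: "M \<in> A" "\<forall>X\<in>A. M \<subseteq> X \<longrightarrow> X = M" using Zorn_Lemma2 by blast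
  have gM: "good M" and H0M: "H0 \<subseteq> M" using M(1) A_def by auto
  have dom: "\<forall>f\<in>V. \<exists>y. (f, y) \<in> M"
  proof (rule ccontr)
    assume "\<not> (\<forall>f\<in>V. \<exists>y. (f, y) \<in> M)"
    then obtain x where x: "x \<in> V" "\<forall>y. (x, y) \<notin> M" by blast
    then have xn: "x \<notin> fst ` M" by force
    obtain c where c: "\<forall>a\<in>M. snd a - p (fadd (fst a) (fsc (-1) x)) \<le> c" "\<forall>a\<in>M. c \<le> p (fadd (fst a) x) - snd a"
      using sup_bound[OF gM x(1)] by blast
    note E = ext_good[OF gM x(1) xn c]
    have "ext M x c \<in> A" using E H0M A_def by auto
    then have "ext M x c = M" using M(2) E(2) by blast
    then show False using E(3) xn by simp
  qed
  have uniqM: "y = y'" if yy: "(f, y) \<in> M" "(f, y') \<in> M" for f y y'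
    using goodD(1)[OF gM yy] by simp
  define \<phi> where "\<phi> f = (THE y. (f, y) \<in> M)" for f
  have phiM: "(f, \<phi> f) \<in> M" if fV: "f \<in> V" for f
  proof -
    obtain y where y: "(f, y) \<in> M" using dom fV by blast
    have "(f, THE y. (f, y) \<in> M) \<in> M"
    proof (rule theI[of "\<lambda>y. (f, y) \<in> M" y])
      show "(f, y) \<in> M" by (rule y)
      fix y' assume "(f, y') \<in> M"
      then show "y' = y" using uniqM y by blast
    qed
    then show ?thesis unfolding \<phi>_def .
  qed
  show ?thesis
  proof (intro exI conjI ballI allI)
    fix f g assume f: "f \<in> V" and g: "g \<in> V"
    have "(fadd f g, \<phi> f + \<phi> g) \<in> M" using goodD(5)[OF gM phiM[OF f] phiM[OF g]] by simp
    then show "\<phi> (fadd f g) = \<phi> f + \<phi> g" using uniqM[OF phiM[OF Vadd[OF f g]]] by simp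
  next
    fix f c assume f: "f \<in> V"
    have "(fsc c f, c * \<phi> f) \<in> M" using goodD(6)[OF gM phiM[OF f]] by simp
    then show "\<phi> (fsc c f) = c * \<phi> f" using uniqM[OF phiM[OF Vsc[OF f]]] by simp
  next
    fix f assume f: "f \<in> V"
    show "\<phi> f \<le> p f" using goodD(3)[OF gM phiM[OF f]] by simp
  next
    have "(f0, p f0) \<in> M" using H0(2) H0M by blast
    then show "\<phi> f0 = p f0" using uniqM[OF phiM[OF f0]] by simp
  qed
qed

end

lemma finite_max_cover:
  fixes T :: "'b topology" and L :: "('b \<Rightarrow> real) set"
  assumes K: "compactin T K" "K \<noteq> {}"
    and Lmax: "\<And>h1 h2. h1 \<in> L \<Longrightarrow> h2 \<in> L \<Longrightarrow> (\<lambda>x. max (h1 x) (h2 x)) \<in> L"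
    and Lc: "\<And>h. h \<in> L \<Longrightarrow> continuous_map T euclideanreal h"
    and Fc: "continuous_map T euclideanreal F"
    and P: "\<And>h1 h2. h1 \<in> L \<Longrightarrow> h2 \<in> L \<Longrightarrow> P h1 \<Longrightarrow> P h2 \<Longrightarrow> P (\<lambda>x. max (h1 x) (h2 x))"
    and ex: "\<And>z. z \<in> K \<Longrightarrow> \<exists>h\<in>L. P h \<and> F z < h z"
  shows "\<exists>h\<in>L. P h \<and> (\<forall>z\<in>K. F z < h z)"
proof -
  obtain hf where hf: "\<And>z. z \<in> K \<Longrightarrow> hf z \<in> L \<and> P (hf z) \<and> F z < hf z z"
    using ex by metis
  define W where "W z = {x \<in> topspace T. F x < hf z x}" for z
  have oW: "openin T (W z)" if "z \<in> K" for z
  proof -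
    have "continuous_map T euclideanreal (\<lambda>x. hf z x - F x)"
      using Lc hf that Fc by (intro continuous_map_diff) auto
    from openin_continuous_map_preimage[OF this, of "{0<..}"]
    show ?thesis unfolding W_def by simp
  qed
  have KW: "K \<subseteq> \<Union>(W ` K)"
    using hf compactin_subset_topspace[OF K(1)] unfolding W_def by blast
  obtain F' where F': "finite F'" "F' \<subseteq> W ` K" "K \<subseteq> \<Union>F'"
    using K(1) oW KW unfolding compactin_def by (metis (no_types, lifting) imageE)
  obtain Z where Z: "Z \<subseteq> K" "finite Z" "F' = W ` Z" using finite_subset_image[OF F'(1,2)] by blast
  have Zne: "Z \<noteq> {}" using Z F'(3) K(2) by auto
  have "\<exists>h\<in>L. P h \<and> (\<forall>x. (\<exists>z\<in>Z. x \<in> W z) \<longrightarrow> F x < h x)"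
    using Z(2) Zne Z(1)
  proof (induction Z rule: finite_ne_induct)
    case (singleton z)
    then show ?case using hf[of z] by (intro bexI[of _ "hf z"]) (auto simp: W_def)
  next
    case (insert z Z)
    then obtain h where h: "h \<in> L" "P h" "\<forall>x. (\<exists>z\<in>Z. x \<in> W z) \<longrightarrow> F x < h x" by auto
    have hz: "hf z \<in> L" "P (hf z)" using hf insert by auto
    show ?case
    proof (intro bexI[of _ "\<lambda>x. max (hf z x) (h x)"] conjI allI impI)
      show "(\<lambda>x. max (hf z x) (h x)) \<in> L" by (rule Lmax[OF hz(1) h(1)])
      show "P (\<lambda>x. max (hf z x) (h x))" by (rule P[OF hz(1) h(1) hz(2) h(2)])
      fix x assume "\<exists>z'\<in>insert z Z. x \<in> W z'"
      then show "F x < max (hf z x) (h x)" using h(3) by (auto simp: W_def)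
    qed
  qed
  then obtain h where "h \<in> L" "P h" "\<forall>x. (\<exists>z\<in>Z. x \<in> W z) \<longrightarrow> F x < h x" by blast
  moreover have "\<forall>x\<in>K. \<exists>z\<in>Z. x \<in> W z" using F'(3) Z(3) by auto
  ultimately show ?thesis by blast
qed

lemma finite_min_cover:
  fixes T :: "'b topology" and L :: "('b \<Rightarrow> real) set"
  assumes K: "compactin T K" "K \<noteq> {}"
    and Lmin: "\<And>h1 h2. h1 \<in> L \<Longrightarrow> h2 \<in> L \<Longrightarrow> (\<lambda>x. min (h1 x) (h2 x)) \<in> L"
    and Lc: "\<And>h. h \<in> L \<Longrightarrow> continuous_map T euclideanreal h"
    and Fc: "continuous_map T euclideanreal F"
    and P: "\<And>h1 h2. h1 \<in> L \<Longrightarrow> h2 \<in> L \<Longrightarrow> P h1 \<Longrightarrow> P h2 \<Longrightarrow> P (\<lambda>x. min (h1 x) (h2 x))"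
    and ex: "\<And>z. z \<in> K \<Longrightarrow> \<exists>h\<in>L. P h \<and> h z < F z"
  shows "\<exists>h\<in>L. P h \<and> (\<forall>z\<in>K. h z < F z)"
proof -
  define L' where "L' = (\<lambda>h x. - h x) ` L"
  have neg: "(\<lambda>x. - (- h x)) = h" for h :: "'b \<Rightarrow> real" by simp
  have L'I: "(\<lambda>x. - h x) \<in> L'" if "h \<in> L" for h using that unfolding L'_def by blast
  have L'E: "\<exists>h\<in>L. h' = (\<lambda>x. - h x)" if "h' \<in> L'" for h' using that unfolding L'_def by blast
  have "\<exists>h\<in>L'. P (\<lambda>x. - h x) \<and> (\<forall>z\<in>K. - F z < h z)"
  proof (rule finite_max_cover[OF K, where P="\<lambda>h. P (\<lambda>x. - h x)"])
    fix h1 h2 assume "h1 \<in> L'" "h2 \<in> L'"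
    then obtain g1 g2 where g: "g1 \<in> L" "g2 \<in> L" "h1 = (\<lambda>x. - g1 x)" "h2 = (\<lambda>x. - g2 x)"
      using L'E by blast
    have "(\<lambda>x. max (h1 x) (h2 x)) = (\<lambda>x. - min (g1 x) (g2 x))" using g by (auto simp: fun_eq_iff)
    then show "(\<lambda>x. max (h1 x) (h2 x)) \<in> L'" using L'I[OF Lmin[OF g(1,2)]] by simp
    assume "P (\<lambda>x. - h1 x)" "P (\<lambda>x. - h2 x)"
    then have "P (\<lambda>x. min (g1 x) (g2 x))" using P[OF g(1,2)] g by simp
    moreover have "(\<lambda>x. - max (h1 x) (h2 x)) = (\<lambda>x. min (g1 x) (g2 x))" using g by (auto simp: fun_eq_iff)
    ultimately show "P (\<lambda>x. - max (h1 x) (h2 x))" by simp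
  next
    fix h assume "h \<in> L'"
    then obtain g where "g \<in> L" "h = (\<lambda>x. - g x)" using L'E by blast
    then show "continuous_map T euclideanreal h" using Lc by (simp add: continuous_map_minus)
  next
    show "continuous_map T euclideanreal (\<lambda>x. - F x)" using Fc by (simp add: continuous_map_minus)
  next
    fix z assume "z \<in> K"
    then obtain h where "h \<in> L" "P h" "h z < F z" using ex by blast
    then show "\<exists>h\<in>L'. P (\<lambda>x. - h x) \<and> - F z < h z"
      by (intro bexI[of _ "\<lambda>x. - h x"]) (auto intro: L'I)
  qed
  then obtain h' where "h' \<in> L'" "P (\<lambda>x. - h' x)" "\<forall>z\<in>K. - F z < h' z" by blast
  then obtain h where "h \<in> L" "h' = (\<lambda>x. - h x)" using L'E by blast
  then show ?thesis using \<open>P (\<lambda>x. - h' x)\<close> \<open>\<forall>z\<in>K. - F z < h' z\<close> by (intro bexI[of _ h]) auto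
qed

lemma lattice_SW:
  fixes T :: "'b topology" and L :: "('b \<Rightarrow> real) set"
  assumes cpt: "compact_space T" and ne: "topspace T \<noteq> {}"
    and Lmax: "\<And>h1 h2. h1 \<in> L \<Longrightarrow> h2 \<in> L \<Longrightarrow> (\<lambda>x. max (h1 x) (h2 x)) \<in> L"
    and Lmin: "\<And>h1 h2. h1 \<in> L \<Longrightarrow> h2 \<in> L \<Longrightarrow> (\<lambda>x. min (h1 x) (h2 x)) \<in> L"
    and Lc: "\<And>h. h \<in> L \<Longrightarrow> continuous_map T euclideanreal h"
    and f: "continuous_map T euclideanreal f"
    and interp: "\<And>x y. x \<in> topspace T \<Longrightarrow> y \<in> topspace T \<Longrightarrow> \<exists>h\<in>L. h x = f x \<and> h y = f y"
    and e: "0 < \<epsilon>"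
  shows "\<exists>h\<in>L. \<forall>x\<in>topspace T. \<bar>h x - f x\<bar> < \<epsilon>"
proof -
  have K: "compactin T (topspace T)" using cpt compact_space_def by blast
  have step1: "\<exists>h\<in>L. h x < f x + \<epsilon> \<and> (\<forall>z\<in>topspace T. f z - \<epsilon> < h z)" if x: "x \<in> topspace T" for x
  proof (rule finite_max_cover[OF K ne Lmax Lc, where P="\<lambda>h. h x < f x + \<epsilon>"])
    show "continuous_map T euclideanreal (\<lambda>z. f z - \<epsilon>)" using f by (intro continuous_intros)
  next
    fix h1 h2 assume "h1 x < f x + \<epsilon>" "h2 x < f x + \<epsilon>"
    then show "max (h1 x) (h2 x) < f x + \<epsilon>" by simp
  next
    fix z assume "z \<in> topspace T"
    then obtain h where "h \<in> L" "h x = f x" "h z = f z" using interp x by blast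
    then show "\<exists>h\<in>L. h x < f x + \<epsilon> \<and> f z - \<epsilon> < h z" using e by (intro bexI[of _ h]) auto
  qed auto
  have "\<exists>h\<in>L. (\<forall>z\<in>topspace T. f z - \<epsilon> < h z) \<and> (\<forall>x\<in>topspace T. h x < f x + \<epsilon>)"
  proof (rule finite_min_cover[OF K ne Lmin Lc, where P="\<lambda>h. \<forall>z\<in>topspace T. f z - \<epsilon> < h z"])
    show "continuous_map T euclideanreal (\<lambda>z. f z + \<epsilon>)" using f by (intro continuous_intros)
  next
    fix h1 h2 assume "\<forall>z\<in>topspace T. f z - \<epsilon> < h1 z" "\<forall>z\<in>topspace T. f z - \<epsilon> < h2 z"
    then show "\<forall>z\<in>topspace T. f z - \<epsilon> < min (h1 z) (h2 z)" by simp
  next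
    fix x assume "x \<in> topspace T"
    then show "\<exists>h\<in>L. (\<forall>z\<in>topspace T. f z - \<epsilon> < h z) \<and> h x < f x + \<epsilon>" using step1 by blast
  qed auto
  then obtain h where "h \<in> L" "\<forall>z\<in>topspace T. f z - \<epsilon> < h z" "\<forall>x\<in>topspace T. h x < f x + \<epsilon>"
    by blast
  then show ?thesis by (intro bexI[of _ h]) (auto simp: abs_less_iff)
qed


locale setting =
  fixes M :: "'a::metric_space set" and T :: "'b topology" and e :: "'a \<times> 'a \<Rightarrow> 'b"
    and \<mu> :: "'b measure"
  assumes cpt: "compact_space T" and haus: "Hausdorff_space T" and radon: "radon_measure T \<mu>"
begin

abbreviation "\<Omega> \<equiv> topspace T"
abbreviation "G \<equiv> Gset M T e"
abbreviation "CT f \<equiv> continuous_map T euclideanreal f"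

definition FC :: "('b \<Rightarrow> real) \<Rightarrow> bool" where
  "FC f \<longleftrightarrow> (\<forall>\<zeta>\<in>\<Omega>. \<forall>\<omega>\<in>\<Omega>. Gequiv M T e \<zeta> \<omega> \<longrightarrow> f \<zeta> = f \<omega>)"

lemma space_mu: "space \<mu> = \<Omega>" and sets_mu: "sets \<mu> = borel_sets_of T" and fin_mu: "finite_measure \<mu>"
  using radon unfolding radon_measure_def by auto

lemma radon_facts:
  assumes "radon_measure T \<nu>"
  shows "space \<nu> = \<Omega>" "sets \<nu> = borel_sets_of T" "finite_measure \<nu>"
  using assms unfolding radon_measure_def by auto

lemma int_cont_gen: "radon_measure T \<nu> \<Longrightarrow> CT g \<Longrightarrow> integrable \<nu> g"
  using radon_facts cont_integrable cpt by metis

lemma int_cont: "CT g \<Longrightarrow> integrable \<mu> g"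
  by (rule int_cont_gen[OF radon])

lemma G_cont: "g \<in> G \<Longrightarrow> CT g"
  by (simp add: Gset_def Cfun_def)

lemma GsetD:
  "g \<in> G \<Longrightarrow> x \<in> M \<Longrightarrow> u \<in> M \<Longrightarrow> y \<in> M \<Longrightarrow> x \<noteq> u \<Longrightarrow> u \<noteq> y \<Longrightarrow> x \<noteq> y \<Longrightarrow>
   dist x y * g (e (x, y)) \<le> dist x u * g (e (x, u)) + dist u y * g (e (u, y))"
  unfolding Gset_def by blast

lemma GsetI:
  assumes "CT g"
    and "\<And>x u y. x \<in> M \<Longrightarrow> u \<in> M \<Longrightarrow> y \<in> M \<Longrightarrow> x \<noteq> u \<Longrightarrow> u \<noteq> y \<Longrightarrow> x \<noteq> y \<Longrightarrow>
      dist x y * g (e (x, y)) \<le> dist x u * g (e (x, u)) + dist u y * g (e (u, y))"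
  shows "g \<in> G"
  using assms unfolding Gset_def Cfun_def by blast

lemma G_const: "0 \<le> c \<Longrightarrow> (\<lambda>x. c) \<in> G"
proof (rule GsetI)
  assume c: "0 \<le> c"
  fix x u y :: 'a
  have "dist x y \<le> dist x u + dist u y" by (rule dist_triangle)
  then show "dist x y * c \<le> dist x u * c + dist u y * c"
    using c by (metis distrib_right mult_right_mono)
qed simp

lemma G_add: "g1 \<in> G \<Longrightarrow> g2 \<in> G \<Longrightarrow> (\<lambda>x. g1 x + g2 x) \<in> G"
proof (rule GsetI)
  assume g1: "g1 \<in> G" and g2: "g2 \<in> G"
  show "CT (\<lambda>x. g1 x + g2 x)" using G_cont g1 g2 by (intro continuous_map_add) auto
  fix x u y assume xuy: "x \<in> M" "u \<in> M" "y \<in> M" "x \<noteq> u" "u \<noteq> y" "x \<noteq> y"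
  have "dist x y * g1 (e (x, y)) \<le> dist x u * g1 (e (x, u)) + dist u y * g1 (e (u, y))"
    "dist x y * g2 (e (x, y)) \<le> dist x u * g2 (e (x, u)) + dist u y * g2 (e (u, y))"
    using GsetD[OF g1 xuy] GsetD[OF g2 xuy] by auto
  then show "dist x y * (g1 (e (x, y)) + g2 (e (x, y)))
       \<le> dist x u * (g1 (e (x, u)) + g2 (e (x, u))) + dist u y * (g1 (e (u, y)) + g2 (e (u, y)))"
    by (simp add: distrib_left)
qed

lemma G_scale: "g \<in> G \<Longrightarrow> 0 \<le> c \<Longrightarrow> (\<lambda>x. c * g x) \<in> G"
proof (rule GsetI)
  assume g: "g \<in> G" and c: "0 \<le> c"
  show "CT (\<lambda>x. c * g x)" using G_cont g by (intro continuous_map_real_mult_left) auto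
  fix x u y assume xuy: "x \<in> M" "u \<in> M" "y \<in> M" "x \<noteq> u" "u \<noteq> y" "x \<noteq> y"
  have "dist x y * g (e (x, y)) \<le> dist x u * g (e (x, u)) + dist u y * g (e (u, y))"
    using GsetD[OF g xuy] .
  then have "c * (dist x y * g (e (x, y))) \<le> c * (dist x u * g (e (x, u)) + dist u y * g (e (u, y)))"
    using c by (rule mult_left_mono)
  then show "dist x y * (c * g (e (x, y))) \<le> dist x u * (c * g (e (x, u))) + dist u y * (c * g (e (u, y)))"
    by (simp add: algebra_simps)
qed

lemma G_max: "g1 \<in> G \<Longrightarrow> g2 \<in> G \<Longrightarrow> (\<lambda>x. max (g1 x) (g2 x)) \<in> G"
proof (rule GsetI)
  assume g1: "g1 \<in> G" and g2: "g2 \<in> G"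
  show "CT (\<lambda>x. max (g1 x) (g2 x))" using G_cont g1 g2 by (intro continuous_map_real_max) auto
  fix x u y assume xuy: "x \<in> M" "u \<in> M" "y \<in> M" "x \<noteq> u" "u \<noteq> y" "x \<noteq> y"
  have i1: "dist x y * g1 (e (x, y)) \<le> dist x u * g1 (e (x, u)) + dist u y * g1 (e (u, y))"
    and i2: "dist x y * g2 (e (x, y)) \<le> dist x u * g2 (e (x, u)) + dist u y * g2 (e (u, y))"
    using GsetD[OF g1 xuy] GsetD[OF g2 xuy] by auto
  have a: "dist x u * g1 (e (x, u)) \<le> dist x u * max (g1 (e (x, u))) (g2 (e (x, u)))"
    "dist x u * g2 (e (x, u)) \<le> dist x u * max (g1 (e (x, u))) (g2 (e (x, u)))"
    "dist u y * g1 (e (u, y)) \<le> dist u y * max (g1 (e (u, y))) (g2 (e (u, y)))"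
    "dist u y * g2 (e (u, y)) \<le> dist u y * max (g1 (e (u, y))) (g2 (e (u, y)))"
    by (auto intro!: mult_left_mono)
  show "dist x y * max (g1 (e (x, y))) (g2 (e (x, y)))
       \<le> dist x u * max (g1 (e (x, u))) (g2 (e (x, u))) + dist u y * max (g1 (e (u, y))) (g2 (e (u, y)))"
  proof (cases "g1 (e (x, y)) \<le> g2 (e (x, y))")
    case True then show ?thesis using i2 a by (simp add: max_def)
  next
    case False then show ?thesis using i1 a by (simp add: max_def)
  qed
qed

lemma G_zero: "(\<lambda>x. 0) \<in> G" using G_const[of 0] by simp

lemma G_FC: "g \<in> G \<Longrightarrow> FC g"
  unfolding FC_def Gequiv_def by blast

lemma Gequiv_refl: "Gequiv M T e \<zeta> \<zeta>" by (simp add: Gequiv_def)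
lemma Gequiv_sym: "Gequiv M T e \<zeta> \<omega> \<Longrightarrow> Gequiv M T e \<omega> \<zeta>" by (auto simp: Gequiv_def)
lemma Gequiv_trans: "Gequiv M T e \<zeta> \<omega> \<Longrightarrow> Gequiv M T e \<omega> \<eta> \<Longrightarrow> Gequiv M T e \<zeta> \<eta>"
  by (auto simp: Gequiv_def)

lemma qmap_eq:
  assumes "\<zeta> \<in> \<Omega>" "\<omega> \<in> \<Omega>"
  shows "qmap M T e \<zeta> = qmap M T e \<omega> \<longleftrightarrow> Gequiv M T e \<zeta> \<omega>"
proof
  assume "qmap M T e \<zeta> = qmap M T e \<omega>"
  moreover have "\<omega> \<in> qmap M T e \<omega>" using assms by (simp add: qmap_def Gequiv_refl)
  ultimately have "\<omega> \<in> qmap M T e \<zeta>" by simp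
  then show "Gequiv M T e \<zeta> \<omega>" by (simp add: qmap_def)
next
  assume "Gequiv M T e \<zeta> \<omega>"
  then show "qmap M T e \<zeta> = qmap M T e \<omega>"
    unfolding qmap_def using Gequiv_sym Gequiv_trans by blast
qed

lemma FC_iff: "FC f \<longleftrightarrow> (\<forall>\<zeta>\<in>\<Omega>. \<forall>\<omega>\<in>\<Omega>. qmap M T e \<zeta> = qmap M T e \<omega> \<longrightarrow> f \<zeta> = f \<omega>)"
  unfolding FC_def using qmap_eq by auto

definition pG :: "('b \<Rightarrow> real) \<Rightarrow> real" where
  "pG f = Inf {integral\<^sup>L \<mu> g | g. g \<in> G \<and> (\<forall>x\<in>\<Omega>. f x \<le> g x)}"

lemma bounded_above_G:
  assumes "\<forall>x\<in>\<Omega>. f x \<le> B"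
  shows "(\<lambda>x. max B 0) \<in> G \<and> (\<forall>x\<in>\<Omega>. f x \<le> max B 0)"
  using assms G_const[of "max B 0"] by auto

lemma pG_props:
  assumes f: "CT f"
  shows "{integral\<^sup>L \<mu> g | g. g \<in> G \<and> (\<forall>x\<in>\<Omega>. f x \<le> g x)} \<noteq> {}"
    "bdd_below {integral\<^sup>L \<mu> g | g. g \<in> G \<and> (\<forall>x\<in>\<Omega>. f x \<le> g x)}"
proof -
  obtain B where B: "\<forall>x\<in>\<Omega>. \<bar>f x\<bar> \<le> B" using cont_bounded[OF cpt f] by blast
  then have "\<forall>x\<in>\<Omega>. f x \<le> B" by auto
  then show "{integral\<^sup>L \<mu> g | g. g \<in> G \<and> (\<forall>x\<in>\<Omega>. f x \<le> g x)} \<noteq> {}"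
    using bounded_above_G by blast
  show "bdd_below {integral\<^sup>L \<mu> g | g. g \<in> G \<and> (\<forall>x\<in>\<Omega>. f x \<le> g x)}"
  proof (rule bdd_belowI)
    fix r assume "r \<in> {integral\<^sup>L \<mu> g | g. g \<in> G \<and> (\<forall>x\<in>\<Omega>. f x \<le> g x)}"
    then obtain g where g: "g \<in> G" "\<forall>x\<in>\<Omega>. f x \<le> g x" "r = integral\<^sup>L \<mu> g" by blast
    show "integral\<^sup>L \<mu> f \<le> r"
      using g int_cont[OF f] int_cont[OF G_cont[OF g(1)]] space_mu
      by (auto intro!: integral_mono)
  qed
qed

lemma pG_le: "CT f \<Longrightarrow> g \<in> G \<Longrightarrow> \<forall>x\<in>\<Omega>. f x \<le> g x \<Longrightarrow> pG f \<le> integral\<^sup>L \<mu> g"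
  unfolding pG_def by (rule cInf_lower) (auto intro: pG_props)

lemma pG_ge: "CT f \<Longrightarrow> (\<And>g. g \<in> G \<Longrightarrow> \<forall>x\<in>\<Omega>. f x \<le> g x \<Longrightarrow> c \<le> integral\<^sup>L \<mu> g) \<Longrightarrow> c \<le> pG f"
  unfolding pG_def by (rule cInf_greatest) (auto dest: pG_props)

lemma upper_eq: "CT f \<Longrightarrow> upper_G_int M T e \<mu> f = ereal (pG f)"
proof -
  assume f: "CT f"
  have "{ereal (integral\<^sup>L \<mu> g) | g. g \<in> G \<and> (\<forall>x\<in>\<Omega>. f x \<le> g x)}
      = ereal ` {integral\<^sup>L \<mu> g | g. g \<in> G \<and> (\<forall>x\<in>\<Omega>. f x \<le> g x)}" by blast
  then show ?thesis unfolding upper_G_int_def pG_def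
    using ereal_Inf'[OF pG_props(2)[OF f] pG_props(1)[OF f]] by simp
qed

lemma pG_add: "CT f1 \<Longrightarrow> CT f2 \<Longrightarrow> pG (fadd f1 f2) \<le> pG f1 + pG f2"
proof -
  assume f1: "CT f1" and f2: "CT f2"
  have c: "CT (fadd f1 f2)" unfolding fadd_def using f1 f2 by (intro continuous_intros)
  have "pG (fadd f1 f2) - pG f2 \<le> pG f1"
  proof (rule pG_ge[OF f1])
    fix g1 assume g1: "g1 \<in> G" "\<forall>x\<in>\<Omega>. f1 x \<le> g1 x"
    have "pG (fadd f1 f2) - integral\<^sup>L \<mu> g1 \<le> pG f2"
    proof (rule pG_ge[OF f2])
      fix g2 assume g2: "g2 \<in> G" "\<forall>x\<in>\<Omega>. f2 x \<le> g2 x"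
      have "pG (fadd f1 f2) \<le> integral\<^sup>L \<mu> (\<lambda>x. g1 x + g2 x)"
        by (rule pG_le[OF c G_add[OF g1(1) g2(1)]]) (use g1 g2 in \<open>auto simp: fadd_def intro!: add_mono\<close>)
      also have "\<dots> = integral\<^sup>L \<mu> g1 + integral\<^sup>L \<mu> g2"
        by (rule Bochner_Integration.integral_add) (auto intro: int_cont G_cont g1 g2)
      finally show "pG (fadd f1 f2) - integral\<^sup>L \<mu> g1 \<le> integral\<^sup>L \<mu> g2" by simp
    qed
    then show "pG (fadd f1 f2) - pG f2 \<le> integral\<^sup>L \<mu> g1" by simp
  qed
  then show ?thesis by simp
qed

lemma pG_hom: "CT f \<Longrightarrow> 0 < c \<Longrightarrow> pG (fsc c f) = c * pG f"
proof -
  assume f: "CT f" and c: "0 < c"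
  have cf: "CT (fsc c f)" unfolding fsc_def using f by (intro continuous_intros)
  have le: "pG (fsc c f) / c \<le> pG f"
  proof (rule pG_ge[OF f])
    fix g assume g: "g \<in> G" "\<forall>x\<in>\<Omega>. f x \<le> g x"
    have "pG (fsc c f) \<le> integral\<^sup>L \<mu> (\<lambda>x. c * g x)"
      by (rule pG_le[OF cf G_scale[OF g(1)]]) (use g c in \<open>auto simp: fsc_def\<close>)
    also have "\<dots> = c * integral\<^sup>L \<mu> g" by simp
    finally show "pG (fsc c f) / c \<le> integral\<^sup>L \<mu> g" using c by (simp add: field_simps)
  qed
  have ge: "c * pG f \<le> pG (fsc c f)"
  proof (rule pG_ge[OF cf])
    fix g assume g: "g \<in> G" "\<forall>x\<in>\<Omega>. fsc c f x \<le> g x"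
    have "pG f \<le> integral\<^sup>L \<mu> (\<lambda>x. (1/c) * g x)"
      by (rule pG_le[OF f G_scale[OF g(1)]]) (use g c in \<open>auto simp: fsc_def field_simps\<close>)
    also have "\<dots> = (1/c) * integral\<^sup>L \<mu> g" by simp
    finally show "c * pG f \<le> integral\<^sup>L \<mu> g" using c by (simp add: field_simps)
  qed
  show ?thesis using le ge c by (simp add: field_simps)
qed


definition Hset :: "('b \<Rightarrow> real) set" where
  "Hset = {(\<lambda>x. g1 x - g2 x) | g1 g2. g1 \<in> G \<and> g2 \<in> G}"

lemma HsetI: "g1 \<in> G \<Longrightarrow> g2 \<in> G \<Longrightarrow> (\<lambda>x. g1 x - g2 x) \<in> Hset"
  unfolding Hset_def by blast

lemma H_max: "h1 \<in> Hset \<Longrightarrow> h2 \<in> Hset \<Longrightarrow> (\<lambda>x. max (h1 x) (h2 x)) \<in> Hset"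
proof -
  assume "h1 \<in> Hset" "h2 \<in> Hset"
  then obtain g1 g2 g3 g4 where g: "g1 \<in> G" "g2 \<in> G" "g3 \<in> G" "g4 \<in> G"
    "h1 = (\<lambda>x. g1 x - g2 x)" "h2 = (\<lambda>x. g3 x - g4 x)" unfolding Hset_def by blast
  have "(\<lambda>x. max (h1 x) (h2 x)) = (\<lambda>x. max (g1 x + g4 x) (g3 x + g2 x) - (g2 x + g4 x))"
    using g by (auto simp: fun_eq_iff max_def)
  moreover have "(\<lambda>x. max (g1 x + g4 x) (g3 x + g2 x)) \<in> G"
    using G_max[OF G_add[OF g(1,4)] G_add[OF g(3,2)]] .
  moreover have "(\<lambda>x. g2 x + g4 x) \<in> G" using G_add[OF g(2,4)] .
  ultimately show ?thesis using HsetI by metis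
qed

lemma H_min: "h1 \<in> Hset \<Longrightarrow> h2 \<in> Hset \<Longrightarrow> (\<lambda>x. min (h1 x) (h2 x)) \<in> Hset"
proof -
  assume "h1 \<in> Hset" "h2 \<in> Hset"
  then obtain g1 g2 g3 g4 where g: "g1 \<in> G" "g2 \<in> G" "g3 \<in> G" "g4 \<in> G"
    "h1 = (\<lambda>x. g1 x - g2 x)" "h2 = (\<lambda>x. g3 x - g4 x)" unfolding Hset_def by blast
  have "(\<lambda>x. min (h1 x) (h2 x)) = (\<lambda>x. (g1 x + g3 x) - max (g1 x + g4 x) (g3 x + g2 x))"
    using g by (auto simp: fun_eq_iff max_def min_def)
  moreover have "(\<lambda>x. max (g1 x + g4 x) (g3 x + g2 x)) \<in> G"
    using G_max[OF G_add[OF g(1,4)] G_add[OF g(3,2)]] .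
  moreover have "(\<lambda>x. g1 x + g3 x) \<in> G" using G_add[OF g(1,3)] .
  ultimately show ?thesis using HsetI by metis
qed

lemma H_cont: "h \<in> Hset \<Longrightarrow> CT h"
  unfolding Hset_def using G_cont by (auto intro!: continuous_map_diff)

lemma H_interp:
  assumes f: "FC f" and x: "x \<in> \<Omega>" and y: "y \<in> \<Omega>"
  shows "\<exists>h\<in>Hset. h x = f x \<and> h y = f y"
proof (cases "Gequiv M T e x y")
  case True
  then have fxy: "f x = f y" using f x y unfolding FC_def by blast
  define c where "c = f x"
  have "(\<lambda>z. max c 0 - max (- c) 0) \<in> Hset"
    unfolding Hset_def using G_const[of "max c 0"] G_const[of "max (-c) 0"] by auto
  moreover have "max c 0 - max (- c) 0 = c" by (simp add: max_def)
  ultimately show ?thesis using fxy c_def by (intro bexI[of _ "\<lambda>z. max c 0 - max (- c) 0"]) auto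
next
  case False
  then obtain g where g: "g \<in> G" "g x \<noteq> g y" unfolding Gequiv_def by blast
  define b where "b = (f y - f x) / (g y - g x)"
  define a where "a = f x - b * g x"
  define h where "h = (\<lambda>z. (max a 0 + max b 0 * g z) - (max (- a) 0 + max (- b) 0 * g z))"
  have hv: "h z = a + b * g z" for z unfolding h_def by (simp add: max_def algebra_simps)
  have "h \<in> Hset" unfolding Hset_def h_def
    using G_add[OF G_const[of "max a 0"] G_scale[OF g(1), of "max b 0"]]
      G_add[OF G_const[of "max (-a) 0"] G_scale[OF g(1), of "max (-b) 0"]] by auto
  moreover have "h x = f x" using hv a_def by simp
  moreover have "h y = f y"
  proof -
    have "h y = f x + b * (g y - g x)" using hv a_def by (simp add: algebra_simps)
    also have "b * (g y - g x) = f y - f x" using g(2) unfolding b_def by simp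
    finally show ?thesis by simp
  qed
  ultimately show ?thesis by blast
qed

lemma int_close:
  assumes nu: "radon_measure T \<nu>" and f: "CT f" and h: "CT h" and close: "\<forall>x\<in>\<Omega>. \<bar>h x - f x\<bar> < \<epsilon>"
  shows "\<bar>integral\<^sup>L \<nu> f - integral\<^sup>L \<nu> h\<bar> \<le> \<epsilon> * measure \<nu> \<Omega>"
proof -
  have sp: "space \<nu> = \<Omega>" using radon_facts[OF nu] by simp
  have fi: "integrable \<nu> f" and hi: "integrable \<nu> h" using int_cont_gen[OF nu] f h by auto
  have fm: "finite_measure \<nu>" using radon_facts[OF nu] by simp
  have "\<bar>integral\<^sup>L \<nu> f - integral\<^sup>L \<nu> h\<bar> = \<bar>integral\<^sup>L \<nu> (\<lambda>x. f x - h x)\<bar>"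
    using fi hi by simp
  also have "\<dots> \<le> integral\<^sup>L \<nu> (\<lambda>x. \<bar>f x - h x\<bar>)"
    using integral_norm_bound[of \<nu> "\<lambda>x. f x - h x"] by simp
  also have "\<dots> \<le> integral\<^sup>L \<nu> (\<lambda>x. \<epsilon>)"
    by (rule integral_mono) (use fi hi close sp finite_measure.integrable_const[OF fm] in \<open>auto simp: abs_minus_commute less_imp_le\<close>)
  also have "\<dots> = \<epsilon> * measure \<nu> \<Omega>" using sp by simp
  finally show ?thesis .
qed

lemma agree:
  assumes nu: "radon_measure T \<nu>" and eqG: "\<forall>g\<in>G. integral\<^sup>L \<mu> g = integral\<^sup>L \<nu> g"
    and f: "CT f" and ff: "FC f"
  shows "integral\<^sup>L \<mu> f = integral\<^sup>L \<nu> f"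
proof -
  have eqH: "integral\<^sup>L \<mu> h = integral\<^sup>L \<nu> h" if hH: "h \<in> Hset" for h
  proof -
    obtain g1 g2 where g: "g1 \<in> G" "g2 \<in> G" "h = (\<lambda>x. g1 x - g2 x)" using hH unfolding Hset_def by blast
    have "integral\<^sup>L \<mu> h = integral\<^sup>L \<mu> g1 - integral\<^sup>L \<mu> g2"
      using g int_cont G_cont by simp
    also have "\<dots> = integral\<^sup>L \<nu> g1 - integral\<^sup>L \<nu> g2" using eqG g by simp
    also have "\<dots> = integral\<^sup>L \<nu> h" using g int_cont_gen[OF nu] G_cont by simp
    finally show ?thesis .
  qed
  have approx: "\<exists>h\<in>Hset. \<forall>x\<in>\<Omega>. \<bar>h x - f x\<bar> < \<epsilon>" if e: "0 < \<epsilon>" for \<epsilon>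
  proof (cases "\<Omega> = {}")
    case True
    have "(\<lambda>x. 0 - 0) \<in> Hset" using HsetI[OF G_zero G_zero] by simp
    then show ?thesis using True by blast
  next
    case False
    show ?thesis
      by (rule lattice_SW[OF cpt False H_max H_min H_cont f H_interp[OF ff] e])
  qed
  have mu0: "0 \<le> measure \<mu> \<Omega> + measure \<nu> \<Omega>" by simp
  have "\<bar>integral\<^sup>L \<mu> f - integral\<^sup>L \<nu> f\<bar> \<le> 0"
  proof (rule eps_le[OF _ mu0])
    fix \<epsilon> :: real assume e: "0 < \<epsilon>"
    obtain h where h: "h \<in> Hset" "\<forall>x\<in>\<Omega>. \<bar>h x - f x\<bar> < \<epsilon>" using approx[OF e] by blast
    have "\<bar>integral\<^sup>L \<mu> f - integral\<^sup>L \<mu> h\<bar> \<le> \<epsilon> * measure \<mu> \<Omega>"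
      by (rule int_close[OF radon f H_cont[OF h(1)] h(2)])
    moreover have "\<bar>integral\<^sup>L \<nu> f - integral\<^sup>L \<nu> h\<bar> \<le> \<epsilon> * measure \<nu> \<Omega>"
      by (rule int_close[OF nu f H_cont[OF h(1)] h(2)])
    moreover have "integral\<^sup>L \<mu> h = integral\<^sup>L \<nu> h" by (rule eqH[OF h(1)])
    ultimately show "\<bar>integral\<^sup>L \<mu> f - integral\<^sup>L \<nu> f\<bar> \<le> 0 + \<epsilon> * (measure \<mu> \<Omega> + measure \<nu> \<Omega>)"
      by (simp add: distrib_left abs_le_iff)
  qed
  then show ?thesis by simp
qed

lemma ii_to_i:
  assumes ii: "\<And>f. CT f \<Longrightarrow> FC f \<Longrightarrow> ereal (integral\<^sup>L \<mu> f) = upper_G_int M T e \<mu> f"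
  shows "meas_minimal M T e \<mu>"
  unfolding meas_minimal_def meas_le_def
proof (intro allI impI ballI)
  fix \<nu> g assume A: "radon_measure T \<nu> \<and> (\<forall>g\<in>G. integral\<^sup>L \<nu> g \<le> integral\<^sup>L \<mu> g)" and g: "g \<in> G"
  then have nu: "radon_measure T \<nu>" and le: "\<forall>g\<in>G. integral\<^sup>L \<nu> g \<le> integral\<^sup>L \<mu> g" by auto
  have sp: "space \<nu> = \<Omega>" using radon_facts[OF nu] by simp
  have cg: "CT g" by (rule G_cont[OF g])
  have cmg: "CT (\<lambda>x. - g x)" using cg by (simp add: continuous_map_minus)
  have fcg: "FC (\<lambda>x. - g x)" using G_FC[OF g] by (simp add: FC_def)
  have "ereal (integral\<^sup>L \<mu> (\<lambda>x. - g x)) = ereal (pG (\<lambda>x. - g x))"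
    using ii[OF cmg fcg] upper_eq[OF cmg] by simp
  then have eq: "- integral\<^sup>L \<mu> g = pG (\<lambda>x. - g x)" by simp
  have "- integral\<^sup>L \<nu> g \<le> pG (\<lambda>x. - g x)"
  proof (rule pG_ge[OF cmg])
    fix h assume h: "h \<in> G" "\<forall>x\<in>\<Omega>. - g x \<le> h x"
    have "0 \<le> integral\<^sup>L \<nu> (\<lambda>x. h x + g x)"
      by (rule Bochner_Integration.integral_nonneg) (use h sp in auto)
    also have "\<dots> = integral\<^sup>L \<nu> h + integral\<^sup>L \<nu> g"
      using int_cont_gen[OF nu] G_cont h(1) cg by simp
    finally have "- integral\<^sup>L \<nu> g \<le> integral\<^sup>L \<nu> h" by simp
    also have "\<dots> \<le> integral\<^sup>L \<mu> h" using le h(1) by blast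
    finally show "- integral\<^sup>L \<nu> g \<le> integral\<^sup>L \<mu> h" .
  qed
  then show "integral\<^sup>L \<mu> g \<le> integral\<^sup>L \<nu> g" using eq by simp
qed

lemma i_to_ii:
  assumes mini: "meas_minimal M T e \<mu>" and f: "CT f" and ff: "FC f"
  shows "ereal (integral\<^sup>L \<mu> f) = upper_G_int M T e \<mu> f"
proof -
  interpret H: hb "{f. CT f}" pG
  proof
    show "(\<lambda>x. 0) \<in> {f. CT f}" by simp
    show "fadd f g \<in> {f. CT f}" if "f \<in> {f. CT f}" "g \<in> {f. CT f}" for f g
      using that unfolding fadd_def by (auto intro: continuous_map_add)
    show "fsc c f \<in> {f. CT f}" if "f \<in> {f. CT f}" for f c
      using that unfolding fsc_def by (auto intro: continuous_map_real_mult_left)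
    show "pG (fadd f g) \<le> pG f + pG g" if "f \<in> {f. CT f}" "g \<in> {f. CT f}" for f g
      using that pG_add by auto
    show "pG (fsc c f) = c * pG f" if "f \<in> {f. CT f}" "0 < c" for f c
      using that pG_hom by auto
  qed
  obtain \<phi> where phi: "\<forall>f\<in>{f. CT f}. \<forall>g\<in>{f. CT f}. \<phi> (fadd f g) = \<phi> f + \<phi> g"
    "\<forall>f\<in>{f. CT f}. \<forall>c. \<phi> (fsc c f) = c * \<phi> f" "\<forall>f\<in>{f. CT f}. \<phi> f \<le> pG f" "\<phi> f = pG f"
    using H.hahn_banach[of f] f by blast
  have pos: "0 \<le> \<phi> h" if h: "CT h" "\<forall>x\<in>\<Omega>. 0 \<le> h x" for h
  proof -
    have ch: "CT (fsc (-1) h)" unfolding fsc_def using h by (intro continuous_intros)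
    have "\<phi> (fsc (-1) h) \<le> pG (fsc (-1) h)" using phi(3) ch by blast
    also have "\<dots> \<le> integral\<^sup>L \<mu> (\<lambda>x. 0)"
      by (rule pG_le[OF ch G_zero]) (use h in \<open>auto simp: fsc_def\<close>)
    finally have "\<phi> (fsc (-1) h) \<le> 0" by simp
    moreover have "\<phi> (fsc (-1) h) = - \<phi> h" using phi(2) h by simp
    ultimately show ?thesis by simp
  qed
  interpret R: rz T \<phi>
  proof
    show "compact_space T" by (rule cpt)
    show "Hausdorff_space T" by (rule haus)
    show "\<phi> (\<lambda>x. f x + g x) = \<phi> f + \<phi> g" if "CT f" "CT g" for f g
      using phi(1) that unfolding fadd_def by auto
    show "\<phi> (\<lambda>x. c * f x) = c * \<phi> f" if "CT f" for f c
      using phi(2) that unfolding fsc_def by auto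
    show "0 \<le> \<phi> f" if "CT f" "\<forall>x\<in>\<Omega>. 0 \<le> f x" for f
      using pos that by blast
  qed
  obtain \<nu> where nu: "radon_measure T \<nu>" "\<forall>g. CT g \<longrightarrow> integral\<^sup>L \<nu> g = \<phi> g"
    using R.riesz_main by blast
  have le1: "meas_le M T e \<nu> \<mu>"
    unfolding meas_le_def
  proof
    fix g assume g: "g \<in> G"
    have "integral\<^sup>L \<nu> g = \<phi> g" using nu(2) G_cont[OF g] by blast
    also have "\<dots> \<le> pG g" using phi(3) G_cont[OF g] by blast
    also have "\<dots> \<le> integral\<^sup>L \<mu> g" by (rule pG_le[OF G_cont[OF g] g]) simp
    finally show "integral\<^sup>L \<nu> g \<le> integral\<^sup>L \<mu> g" .
  qed
  then have le2: "meas_le M T e \<mu> \<nu>" using mini nu(1) unfolding meas_minimal_def by blast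
  have eqG: "\<forall>g\<in>G. integral\<^sup>L \<mu> g = integral\<^sup>L \<nu> g"
    using le1 le2 unfolding meas_le_def by (meson order_antisym)
  have "integral\<^sup>L \<mu> f = integral\<^sup>L \<nu> f" by (rule agree[OF nu(1) eqG f ff])
  also have "\<dots> = pG f" using nu(2) f phi(4) by simp
  finally show ?thesis using upper_eq[OF f] by simp
qed

end

lemma layer_sum2:
  fixes t \<delta> :: real
  assumes "0 \<le> t" "0 < \<delta>"
  shows "(\<Sum>k<N. min (max (t - real k * \<delta>) 0) \<delta>) = min t (real N * \<delta>)"
proof (induction N)
  case 0 then show ?case using assms by simp
next
  case (Suc N)
  have "(\<Sum>k<Suc N. min (max (t - real k * \<delta>) 0) \<delta>) = min t (real N * \<delta>) + min (max (t - real N * \<delta>) 0) \<delta>"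
    using Suc by simp
  also have "\<dots> = min t (real (Suc N) * \<delta>)"
    using assms by (simp add: min_def max_def algebra_simps)
  finally show ?case .
qed

context setting
begin

lemma usc_bounded:
  assumes f: "usc_fun T f"
  shows "\<exists>B. \<forall>x\<in>\<Omega>. f x \<le> B"
proof -
  have K: "compactin T \<Omega>" using cpt compact_space_def by blast
  define U where "U n = {x\<in>\<Omega>. f x < real n}" for n :: nat
  have oU: "\<forall>B\<in>range U. openin T B" using f unfolding usc_fun_def U_def by auto
  have cov: "\<Omega> \<subseteq> \<Union>(range U)"
  proof
    fix x assume x: "x \<in> \<Omega>"
    have "f x < real (nat \<lceil>f x\<rceil> + 1)" by linarith
    then show "x \<in> \<Union>(range U)" using x unfolding U_def by blast
  qed
  obtain F where F: "finite F" "F \<subseteq> range U" "\<Omega> \<subseteq> \<Union>F"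
    using K oU cov unfolding compactin_def by meson
  obtain C where C: "finite C" "F = U ` C" using finite_subset_image[OF F(1,2)] by blast
  obtain N where N: "C \<subseteq> {..<N}" using finite_nat_bounded[OF C(1)] by blast
  have "f x \<le> real N" if x: "x \<in> \<Omega>" for x
  proof -
    obtain n where "n \<in> C" "x \<in> U n" using F(3) C(2) x by auto
    then have "f x < real n" "n < N" using N unfolding U_def by auto
    then show ?thesis by simp
  qed
  then show ?thesis by blast
qed

lemma usc_closed: "usc_fun T f \<Longrightarrow> closedin T {x\<in>\<Omega>. a \<le> f x}"
proof -
  assume f: "usc_fun T f"
  have "\<Omega> - {x\<in>\<Omega>. a \<le> f x} = {x\<in>\<Omega>. f x < a}" by auto
  then show ?thesis using f unfolding usc_fun_def closedin_def by auto
qed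

lemma cont_usc: "CT f \<Longrightarrow> usc_fun T f"
  unfolding usc_fun_def using openin_continuous_map_preimage[of T euclideanreal f "{..<_}"] by auto

lemma FC_cont_closed:
  shows "\<And>u v. CT u \<Longrightarrow> FC u \<Longrightarrow> CT v \<Longrightarrow> FC v \<Longrightarrow> CT (\<lambda>x. max (u x) (v x)) \<and> FC (\<lambda>x. max (u x) (v x))"
    and "\<And>u v. CT u \<Longrightarrow> FC u \<Longrightarrow> CT v \<Longrightarrow> FC v \<Longrightarrow> CT (\<lambda>x. min (u x) (v x)) \<and> FC (\<lambda>x. min (u x) (v x))"
  unfolding FC_def by (auto intro: continuous_map_real_max continuous_map_real_min)

lemma sep_FC:
  assumes z: "\<zeta> \<in> \<Omega>" and C: "closedin T C" and ne: "\<forall>\<omega>\<in>C. \<not> Gequiv M T e \<zeta> \<omega>"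
  shows "\<exists>u. CT u \<and> FC u \<and> u \<zeta> = 0 \<and> (\<forall>\<omega>\<in>C. 1 < u \<omega>)"
proof (cases "C = {}")
  case True then show ?thesis by (intro exI[of _ "\<lambda>x. 0"]) (auto simp: FC_def)
next
  case False
  have K: "compactin T C" using C cpt closedin_compact_space by blast
  have "\<exists>h\<in>{u. CT u \<and> FC u}. h \<zeta> = 0 \<and> (\<forall>\<omega>\<in>C. 1 < h \<omega>)"
  proof (rule finite_max_cover[OF K False, where P="\<lambda>h. h \<zeta> = 0"])
    fix \<omega> assume w: "\<omega> \<in> C"
    then obtain g where g: "g \<in> G" "g \<zeta> \<noteq> g \<omega>" using ne unfolding Gequiv_def by blast
    define u where "u x = 2 * \<bar>g x - g \<zeta>\<bar> / \<bar>g \<omega> - g \<zeta>\<bar>" for x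
    have "CT u" unfolding u_def using G_cont[OF g(1)] g(2) by (intro continuous_intros) auto
    moreover have "FC u" using G_FC[OF g(1)] unfolding u_def FC_def by auto
    moreover have "u \<zeta> = 0" "1 < u \<omega>" using g(2) unfolding u_def by auto
    ultimately show "\<exists>h\<in>{u. CT u \<and> FC u}. h \<zeta> = 0 \<and> 1 < h \<omega>" by blast
  qed (use FC_cont_closed(1) in auto)
  then show ?thesis by blast
qed

definition sat :: "'b set \<Rightarrow> 'b set" where
  "sat C = {\<zeta>\<in>\<Omega>. \<exists>\<omega>\<in>C. Gequiv M T e \<zeta> \<omega>}"

lemma sat_closed:
  assumes C: "closedin T C"
  shows "closedin T (sat C)"
proof -
  have CO: "C \<subseteq> \<Omega>" using closedin_subset[OF C] .
  have "openin T (\<Omega> - sat C)"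
  proof (subst openin_subopen, intro ballI)
    fix \<zeta> assume z: "\<zeta> \<in> \<Omega> - sat C"
    then have ne: "\<forall>\<omega>\<in>C. \<not> Gequiv M T e \<zeta> \<omega>" unfolding sat_def by auto
    obtain u where u: "CT u" "FC u" "u \<zeta> = 0" "\<forall>\<omega>\<in>C. 1 < u \<omega>" using sep_FC[OF _ C ne] z by auto
    define U where "U = {x\<in>\<Omega>. u x < 1}"
    have "openin T U" unfolding U_def using openin_continuous_map_preimage[OF u(1), of "{..<1}"] by simp
    moreover have "\<zeta> \<in> U" using z u(3) unfolding U_def by auto
    moreover have "U \<subseteq> \<Omega> - sat C"
    proof
      fix x assume x: "x \<in> U"
      have "x \<notin> sat C"
      proof
        assume "x \<in> sat C"
        then obtain \<omega> where w: "\<omega> \<in> C" "Gequiv M T e x \<omega>" unfolding sat_def by blast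
        then have "u x = u \<omega>" using u(2) x CO unfolding FC_def U_def by blast
        then show False using u(4) w(1) x unfolding U_def by force
      qed
      then show "x \<in> \<Omega> - sat C" using x unfolding U_def by auto
    qed
    ultimately show "\<exists>U. openin T U \<and> \<zeta> \<in> U \<and> U \<subseteq> \<Omega> - sat C" by blast
  qed
  moreover have "sat C \<subseteq> \<Omega>" unfolding sat_def by auto
  ultimately show ?thesis unfolding closedin_def by blast
qed

lemma ury_FC:
  assumes K: "closedin T K" and satK: "\<forall>\<zeta>\<in>K. \<forall>\<omega>\<in>\<Omega>. Gequiv M T e \<zeta> \<omega> \<longrightarrow> \<omega> \<in> K"
    and V: "openin T V" and KV: "K \<subseteq> V"
  shows "\<exists>h. CT h \<and> FC h \<and> (\<forall>x\<in>\<Omega>. 0 \<le> h x \<and> h x \<le> 1) \<and> (\<forall>x\<in>K. h x = 1) \<and> (\<forall>x\<in>\<Omega> - V. h x = 0)"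
proof (cases "\<Omega> - V = {}")
  case True then show ?thesis by (intro exI[of _ "\<lambda>x. 1"]) (auto simp: FC_def)
next
  case nV: False
  show ?thesis
  proof (cases "K = {}")
    case True then show ?thesis by (intro exI[of _ "\<lambda>x. 0"]) (auto simp: FC_def)
  next
    case False
    have cK': "compactin T (\<Omega> - V)" using V cpt closedin_compact_space by blast
    have "\<exists>h\<in>{u. CT u \<and> FC u}. (\<forall>\<omega>\<in>K. 1 < h \<omega>) \<and> (\<forall>z\<in>\<Omega> - V. h z < 1/2)"
    proof (rule finite_min_cover[OF cK' nV, where P="\<lambda>h. \<forall>\<omega>\<in>K. 1 < h \<omega>"])
      fix w assume w: "w \<in> \<Omega> - V"
      have ne: "\<forall>\<omega>\<in>K. \<not> Gequiv M T e w \<omega>"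
        using satK w KV Gequiv_sym by blast
      obtain u where u: "CT u" "FC u" "u w = 0" "\<forall>\<omega>\<in>K. 1 < u \<omega>" using sep_FC[OF _ K ne] w by auto
      then show "\<exists>h\<in>{u. CT u \<and> FC u}. (\<forall>\<omega>\<in>K. 1 < h \<omega>) \<and> h w < 1/2" by auto
    qed (use FC_cont_closed(2) in auto)
    then obtain v where v: "CT v" "FC v" "\<forall>\<omega>\<in>K. 1 < v \<omega>" "\<forall>z\<in>\<Omega> - V. v z < 1/2" by blast
    define h where "h x = min 1 (max 0 (2 * v x - 1))" for x
    have "CT h" unfolding h_def using v(1) by (intro continuous_intros) auto
    moreover have "FC h" using v(2) unfolding h_def FC_def by auto
    moreover have "\<forall>x\<in>\<Omega>. 0 \<le> h x \<and> h x \<le> 1" unfolding h_def by auto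
    moreover have "\<forall>x\<in>K. h x = 1" using v(3) unfolding h_def by auto
    moreover have "\<forall>x\<in>\<Omega> - V. h x = 0"
    proof
      fix x assume "x \<in> \<Omega> - V"
      then have "v x < 1/2" using v(4) by blast
      then show "h x = 0" unfolding h_def by simp
    qed
    ultimately show ?thesis by blast
  qed
qed

lemma meas_mu: "A \<in> borel_sets_of T \<Longrightarrow> A \<in> sets \<mu>" by (simp add: sets_mu)

lemma outer_reg:
  assumes K: "closedin T K" and e: "0 < \<epsilon>"
  shows "\<exists>V. openin T V \<and> K \<subseteq> V \<and> measure \<mu> V \<le> measure \<mu> K + \<epsilon>"
proof -
  have KO: "K \<subseteq> \<Omega>" using closedin_subset[OF K] .
  have OB: "\<Omega> \<in> sets \<mu>" by (simp add: sets_mu borel_sets_top)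
  have KB: "K \<in> sets \<mu>" using K by (simp add: sets_mu borel_sets_closed)
  have CB: "\<Omega> - K \<in> borel_sets_of T" using K by (intro borel_sets_open) auto
  have mC: "measure \<mu> (\<Omega> - K) = measure \<mu> \<Omega> - measure \<mu> K"
    using finite_measure.finite_measure_Diff[OF fin_mu OB KB KO] .
  show ?thesis
  proof (cases "measure \<mu> (\<Omega> - K) \<le> \<epsilon>")
    case True
    then show ?thesis using mC by (intro exI[of _ \<Omega>]) (auto simp: KO)
  next
    case False
    have inner: "emeasure \<mu> (\<Omega> - K) = (SUP K'\<in>{K'. compactin T K' \<and> K' \<subseteq> \<Omega> - K}. emeasure \<mu> K')"
      using radon CB sets_mu unfolding radon_measure_def by auto
    have "ennreal (measure \<mu> (\<Omega> - K) - \<epsilon>) < ennreal (measure \<mu> (\<Omega> - K))"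
      using False e by (simp add: ennreal_lessI)
    also have "\<dots> = emeasure \<mu> (\<Omega> - K)"
      using finite_measure.emeasure_eq_measure[OF fin_mu] by simp
    finally obtain K' where K': "compactin T K'" "K' \<subseteq> \<Omega> - K"
      "ennreal (measure \<mu> (\<Omega> - K) - \<epsilon>) < emeasure \<mu> K'"
      using inner less_SUP_iff by (metis (no_types, lifting) mem_Collect_eq)
    have cK': "closedin T K'" using K'(1) haus compactin_imp_closedin by blast
    have K'B: "K' \<in> sets \<mu>" using cK' by (simp add: sets_mu borel_sets_closed)
    have "measure \<mu> (\<Omega> - K) - \<epsilon> < measure \<mu> K'"
      using K'(3) finite_measure.emeasure_eq_measure[OF fin_mu] False e
      by (simp add: ennreal_less_iff)
    define V where "V = \<Omega> - K'"
    have "openin T V" unfolding V_def using cK' by blast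
    moreover have "K \<subseteq> V" using K'(2) KO unfolding V_def by auto
    moreover have "measure \<mu> V = measure \<mu> \<Omega> - measure \<mu> K'"
      unfolding V_def using finite_measure.finite_measure_Diff[OF fin_mu OB K'B] closedin_subset[OF cK'] by simp
    ultimately show ?thesis using mC \<open>measure \<mu> (\<Omega> - K) - \<epsilon> < measure \<mu> K'\<close>
      by (intro exI[of _ V]) auto
  qed
qed

lemma closed_approx:
  assumes K: "closedin T K" and satK: "\<forall>\<zeta>\<in>K. \<forall>\<omega>\<in>\<Omega>. Gequiv M T e \<zeta> \<omega> \<longrightarrow> \<omega> \<in> K" and e: "0 < \<epsilon>"
  shows "\<exists>h. CT h \<and> FC h \<and> (\<forall>x\<in>\<Omega>. 0 \<le> h x \<and> h x \<le> 1) \<and> (\<forall>x\<in>K. h x = 1)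
             \<and> integral\<^sup>L \<mu> h \<le> measure \<mu> K + \<epsilon>"
proof -
  obtain V where V: "openin T V" "K \<subseteq> V" "measure \<mu> V \<le> measure \<mu> K + \<epsilon>"
    using outer_reg[OF K e] by blast
  obtain h where h: "CT h" "FC h" "\<forall>x\<in>\<Omega>. 0 \<le> h x \<and> h x \<le> 1" "\<forall>x\<in>K. h x = 1" "\<forall>x\<in>\<Omega> - V. h x = 0"
    using ury_FC[OF K satK V(1,2)] by blast
  have VB: "V \<in> sets \<mu>" using V(1) by (simp add: sets_mu borel_sets_open)
  have intV: "integrable \<mu> (indicator V :: 'b \<Rightarrow> real)"
    using VB finite_measure.emeasure_finite[OF fin_mu] by (intro integrable_real_indicator) (auto simp: top.not_eq_extremum)
  have "integral\<^sup>L \<mu> h \<le> integral\<^sup>L \<mu> (indicator V :: 'b \<Rightarrow> real)"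
    by (rule integral_mono[OF int_cont[OF h(1)] intV]) (use h space_mu in \<open>auto simp: indicator_def\<close>)
  also have "\<dots> = measure \<mu> V" using VB sets.sets_into_space by (simp add: Int_absorb2)
  finally show ?thesis using h V(3) by (intro exI[of _ h]) auto
qed


lemma usc_int:
  assumes F: "usc_fun T F" and bnd: "\<forall>x\<in>\<Omega>. a \<le> F x \<and> F x \<le> b"
  shows "integrable \<mu> F"
proof (rule finite_measure.integrable_const_bound[OF fin_mu, where B="max \<bar>a\<bar> \<bar>b\<bar>"])
  show "AE x in \<mu>. norm (F x) \<le> max \<bar>a\<bar> \<bar>b\<bar>"
    using bnd space_mu by (intro AE_I2) (auto simp: abs_le_iff)
  show "F \<in> borel_measurable \<mu>" by (rule usc_meas[OF space_mu sets_mu F])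
qed

lemma int_ind: "A \<in> sets \<mu> \<Longrightarrow> integral\<^sup>L \<mu> (\<lambda>x. c * indicator A x) = c * measure \<mu> A"
  using sets.sets_into_space by (simp add: Int_absorb2)

lemma integrable_ind: "A \<in> sets \<mu> \<Longrightarrow> integrable \<mu> (\<lambda>x. c * (indicator A x :: real))"
  using finite_measure.emeasure_finite[OF fin_mu]
  by (intro integrable_mult_right integrable_real_indicator) (auto simp: top.not_eq_extremum)

lemma layer_approx:
  assumes F: "usc_fun T F" and fF: "FC F" and bnd: "\<forall>x\<in>\<Omega>. a \<le> F x \<and> F x \<le> b" and e: "0 < \<epsilon>"
  shows "\<exists>h. CT h \<and> FC h \<and> (\<forall>x\<in>\<Omega>. F x \<le> h x) \<and> integral\<^sup>L \<mu> h \<le> integral\<^sup>L \<mu> F + \<epsilon>"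
proof -
  define m0 where "m0 = measure \<mu> \<Omega>"
  have m0: "0 \<le> m0" unfolding m0_def by simp
  define \<delta> where "\<delta> = \<epsilon> / (2 * (m0 + 1))"
  have d: "0 < \<delta>" unfolding \<delta>_def using e m0 by simp
  define N where "N = nat \<lceil>(b - a) / \<delta>\<rceil>"
  have "(b - a) / \<delta> \<le> real N" unfolding N_def by linarith
  then have bN: "b - a \<le> real N * \<delta>" using d by (simp add: field_simps)
  define e' where "e' = \<epsilon> / (2 * (real N * \<delta> + 1))"
  have NP: "0 \<le> real N * \<delta>" using d by simp
  have "0 < real N * \<delta> + 1" using NP by (rule add_nonneg_pos) simp
  then have "0 < 2 * (real N * \<delta> + 1)" by (rule mult_pos_pos[rotated]) simp
  then have e': "0 < e'" unfolding e'_def using e by simp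
  define K where "K k = {x\<in>\<Omega>. a + real k * \<delta> \<le> F x}" for k
  have cK: "closedin T (K k)" for k unfolding K_def by (rule usc_closed[OF F])
  have satK: "\<forall>\<zeta>\<in>K k. \<forall>\<omega>\<in>\<Omega>. Gequiv M T e \<zeta> \<omega> \<longrightarrow> \<omega> \<in> K k" for k
    using fF unfolding K_def FC_def by auto
  have KB: "K k \<in> sets \<mu>" for k using cK by (simp add: sets_mu borel_sets_closed)
  have "\<forall>k. \<exists>h. CT h \<and> FC h \<and> (\<forall>x\<in>\<Omega>. 0 \<le> h x \<and> h x \<le> 1) \<and> (\<forall>x\<in>K k. h x = 1)
             \<and> integral\<^sup>L \<mu> h \<le> measure \<mu> (K k) + e'"
    using closed_approx[OF cK satK e'] by blast
  from choice[OF this] obtain hk where hk_all: "\<forall>k. CT (hk k) \<and> FC (hk k) \<and> (\<forall>x\<in>\<Omega>. 0 \<le> hk k x \<and> hk k x \<le> 1)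
     \<and> (\<forall>x\<in>K k. hk k x = 1) \<and> integral\<^sup>L \<mu> (hk k) \<le> measure \<mu> (K k) + e'" by blast
  have hk: "\<And>k. CT (hk k)" "\<And>k. FC (hk k)" "\<And>k. \<forall>x\<in>\<Omega>. 0 \<le> hk k x \<and> hk k x \<le> 1"
    "\<And>k. \<forall>x\<in>K k. hk k x = 1" "\<And>k. integral\<^sup>L \<mu> (hk k) \<le> measure \<mu> (K k) + e'"
    using hk_all by blast+
  define h where "h x = a + (\<Sum>k<N. \<delta> * hk k x)" for x
  have ch: "CT h" unfolding h_def using hk(1) by (intro continuous_intros) auto
  have fh: "FC h" using hk(2) unfolding h_def FC_def by simp
  have tsum: "F x - a = (\<Sum>k<N. min (max (F x - a - real k * \<delta>) 0) \<delta>)" if x: "x \<in> \<Omega>" for x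
    using layer_sum2[of "F x - a" \<delta> N] bnd x d bN by auto
  have up: "min (max (F x - a - real k * \<delta>) 0) \<delta> \<le> \<delta> * hk k x" if x: "x \<in> \<Omega>" for x k
  proof (cases "0 < F x - a - real k * \<delta>")
    case True
    then have "x \<in> K k" using x unfolding K_def by auto
    then have "hk k x = 1" using hk(4) by blast
    then show ?thesis by simp
  next
    case False
    then show ?thesis using hk(3) x d by auto
  qed
  have lo: "\<delta> * indicator (K (Suc k)) x \<le> min (max (F x - a - real k * \<delta>) 0) \<delta>" if x: "x \<in> \<Omega>" for x k
  proof (cases "x \<in> K (Suc k)")
    case True
    then have "a + (1 + real k) * \<delta> \<le> F x" unfolding K_def by auto
    then have le: "\<delta> \<le> F x - a - real k * \<delta>" by (simp add: algebra_simps)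
    have i1: "indicator (K (Suc k)) x = (1::real)" using True by (simp add: indicator_def)
    have "max (F x - a - real k * \<delta>) 0 = F x - a - real k * \<delta>" using le d by linarith
    then have "min (max (F x - a - real k * \<delta>) 0) \<delta> = \<delta>" using le by linarith
    then show ?thesis using i1 by simp
  next
    case False
    then have i0: "indicator (K (Suc k)) x = (0::real)" by (simp add: indicator_def)
    have "0 \<le> min (max (F x - a - real k * \<delta>) 0) \<delta>" using d by linarith
    then show ?thesis using i0 by simp
  qed
  have Fh: "\<forall>x\<in>\<Omega>. F x \<le> h x"
  proof
    fix x assume x: "x \<in> \<Omega>"
    have "(\<Sum>k<N. min (max (F x - a - real k * \<delta>) 0) \<delta>) \<le> (\<Sum>k<N. \<delta> * hk k x)"
      by (rule sum_mono) (rule up[OF x])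
    then show "F x \<le> h x" using tsum[OF x] unfolding h_def by linarith
  qed
  define lw where "lw x = a + (\<Sum>k<N. \<delta> * indicator (K (Suc k)) x)" for x
  have lwF: "\<forall>x\<in>\<Omega>. lw x \<le> F x"
  proof
    fix x assume x: "x \<in> \<Omega>"
    have "(\<Sum>k<N. \<delta> * indicator (K (Suc k)) x) \<le> (\<Sum>k<N. min (max (F x - a - real k * \<delta>) 0) \<delta>)"
      by (rule sum_mono) (rule lo[OF x])
    then show "lw x \<le> F x" using tsum[OF x] unfolding lw_def by linarith
  qed
  have iF: "integrable \<mu> F" by (rule usc_int[OF F bnd])
  have ihk: "integrable \<mu> (hk k)" for k by (rule int_cont[OF hk(1)])
  have iconst: "integrable \<mu> (\<lambda>x. a)" by (rule finite_measure.integrable_const[OF fin_mu])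
  have int_h: "integral\<^sup>L \<mu> h = m0 * a + (\<Sum>k<N. \<delta> * integral\<^sup>L \<mu> (hk k))"
  proof -
    have "integral\<^sup>L \<mu> h = integral\<^sup>L \<mu> (\<lambda>x. a) + integral\<^sup>L \<mu> (\<lambda>x. \<Sum>k<N. \<delta> * hk k x)"
      unfolding h_def by (rule Bochner_Integration.integral_add[OF iconst])
        (intro Bochner_Integration.integrable_sum integrable_mult_right ihk)
    also have "integral\<^sup>L \<mu> (\<lambda>x. \<Sum>k<N. \<delta> * hk k x) = (\<Sum>k<N. integral\<^sup>L \<mu> (\<lambda>x. \<delta> * hk k x))"
      by (rule Bochner_Integration.integral_sum) (intro integrable_mult_right ihk)
    finally show ?thesis unfolding m0_def using space_mu by simp
  qed
  have int_lw: "integral\<^sup>L \<mu> lw = m0 * a + (\<Sum>k<N. \<delta> * measure \<mu> (K (Suc k)))"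
  proof -
    have "integral\<^sup>L \<mu> lw = integral\<^sup>L \<mu> (\<lambda>x. a) + integral\<^sup>L \<mu> (\<lambda>x. \<Sum>k<N. \<delta> * indicator (K (Suc k)) x)"
      unfolding lw_def by (rule Bochner_Integration.integral_add[OF iconst])
        (intro Bochner_Integration.integrable_sum integrable_ind KB)
    also have "integral\<^sup>L \<mu> (\<lambda>x. \<Sum>k<N. \<delta> * indicator (K (Suc k)) x)
        = (\<Sum>k<N. integral\<^sup>L \<mu> (\<lambda>x. \<delta> * indicator (K (Suc k)) x))"
      by (rule Bochner_Integration.integral_sum) (intro integrable_ind KB)
    also have "\<dots> = (\<Sum>k<N. \<delta> * measure \<mu> (K (Suc k)))"
      by (rule sum.cong[OF refl]) (rule int_ind[OF KB])
    finally show ?thesis unfolding m0_def using space_mu by simp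
  qed
  have ilw: "integrable \<mu> lw" unfolding lw_def
    by (intro Bochner_Integration.integrable_add iconst Bochner_Integration.integrable_sum integrable_ind KB)
  have "integral\<^sup>L \<mu> lw \<le> integral\<^sup>L \<mu> F"
    by (rule integral_mono[OF ilw iF]) (use lwF space_mu in auto)
  then have F_lo: "m0 * a + (\<Sum>k<N. \<delta> * measure \<mu> (K (Suc k))) \<le> integral\<^sup>L \<mu> F" using int_lw by simp
  have h_up: "integral\<^sup>L \<mu> h \<le> m0 * a + (\<Sum>k<N. \<delta> * (measure \<mu> (K k) + e'))"
    unfolding int_h using hk(5) d by (intro add_left_mono sum_mono mult_left_mono) auto
  have tel: "(\<Sum>k<N. measure \<mu> (K k) - measure \<mu> (K (Suc k))) = measure \<mu> (K 0) - measure \<mu> (K N)"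
    by (rule sum_lessThan_telescope')
  have K0: "measure \<mu> (K 0) \<le> m0" unfolding m0_def
    using KB by (intro finite_measure.finite_measure_mono[OF fin_mu]) (auto simp: K_def sets_mu borel_sets_top)
  have "(\<Sum>k<N. \<delta> * (measure \<mu> (K k) + e')) - (\<Sum>k<N. \<delta> * measure \<mu> (K (Suc k)))
      = (\<Sum>k<N. \<delta> * (measure \<mu> (K k) - measure \<mu> (K (Suc k))) + \<delta> * e')"
    unfolding sum_subtractf[symmetric] by (rule sum.cong) (simp_all add: right_diff_distrib distrib_left)
  also have "\<dots> = \<delta> * (\<Sum>k<N. measure \<mu> (K k) - measure \<mu> (K (Suc k))) + real N * \<delta> * e'"
    by (simp add: sum.distrib sum_distrib_left)
  also have "\<dots> \<le> \<delta> * m0 + real N * \<delta> * e'"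
  proof -
    have "0 \<le> measure \<mu> (K N)" by simp
    then have "(\<Sum>k<N. measure \<mu> (K k) - measure \<mu> (K (Suc k))) \<le> m0" using tel K0 by linarith
    then show ?thesis using d by (simp add: mult_left_mono)
  qed
  also have "\<delta> * m0 \<le> \<epsilon> / 2"
    unfolding \<delta>_def using e m0 by (simp add: field_simps)
  also have "real N * \<delta> * e' \<le> \<epsilon> / 2"
  proof -
    have "real N * \<delta> * e' = \<epsilon> / 2 * (real N * \<delta> / (real N * \<delta> + 1))"
      unfolding e'_def by (simp add: field_simps)
    also have "\<dots> \<le> \<epsilon> / 2 * 1"
    proof (rule mult_left_mono)
      have "real N * \<delta> \<le> real N * \<delta> + 1" by simp
      then show "real N * \<delta> / (real N * \<delta> + 1) \<le> 1" using NP by (simp add: divide_le_eq_1)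
    qed (use e in simp)
    finally show ?thesis by simp
  qed
  finally have diff: "(\<Sum>k<N. \<delta> * (measure \<mu> (K k) + e')) - (\<Sum>k<N. \<delta> * measure \<mu> (K (Suc k))) \<le> \<epsilon>"
    by simp
  have "integral\<^sup>L \<mu> h \<le> integral\<^sup>L \<mu> F + \<epsilon>" using h_up F_lo diff by linarith
  then show ?thesis using ch fh Fh by blast
qed


lemma usc_max_const: "usc_fun T F \<Longrightarrow> usc_fun T (\<lambda>x. max (F x) c)"
  unfolding usc_fun_def
proof
  fix a assume F: "\<forall>a. openin T {x \<in> \<Omega>. F x < a}"
  show "openin T {x \<in> \<Omega>. max (F x) c < a}"
  proof (cases "c < a")
    case True
    then have eq: "{x \<in> \<Omega>. max (F x) c < a} = {x \<in> \<Omega>. F x < a}" using True by auto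
    show ?thesis unfolding eq using F by simp
  next
    case False
    then have eq: "{x \<in> \<Omega>. max (F x) c < a} = {}" using False by auto
    show ?thesis unfolding eq by simp
  qed
qed

lemma trunc_approx:
  assumes F: "usc_fun T F" and fF: "FC F" and r: "eintegral \<mu> F < ereal r"
  shows "\<exists>h. CT h \<and> FC h \<and> (\<forall>x\<in>\<Omega>. F x \<le> h x) \<and> integral\<^sup>L \<mu> h < r"
proof -
  obtain B where B: "\<forall>x\<in>\<Omega>. F x \<le> B" using usc_bounded[OF F] by blast
  define Fm where "Fm m x = max (F x) (B - real m)" for m x
  have uscm: "usc_fun T (Fm m)" for m unfolding Fm_def by (rule usc_max_const[OF F])
  have fcm: "FC (Fm m)" for m using fF unfolding Fm_def FC_def by auto
  have bndm: "\<forall>x\<in>\<Omega>. B - real m \<le> Fm m x \<and> Fm m x \<le> B" for m using B unfolding Fm_def by auto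
  have intm: "integrable \<mu> (Fm m)" for m by (rule usc_int[OF uscm bndm])
  define m0 where "m0 = measure \<mu> \<Omega>"
  have Fmeas[measurable]: "F \<in> borel_measurable \<mu>" by (rule usc_meas[OF space_mu sets_mu F])
  have key: "\<exists>m. integral\<^sup>L \<mu> (Fm m) < r"
  proof (cases "m0 * B < r")
    case True
    have "integral\<^sup>L \<mu> (Fm 0) = integral\<^sup>L \<mu> (\<lambda>x. B)"
      by (rule Bochner_Integration.integral_cong) (use B space_mu in \<open>auto simp: Fm_def\<close>)
    also have "\<dots> = m0 * B" unfolding m0_def using space_mu by simp
    finally have "integral\<^sup>L \<mu> (Fm 0) < r" using True by simp
    then show ?thesis by blast
  next
    case False
    define c where "c = m0 * B - r"
    have c0: "0 \<le> c" using False c_def by simp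
    define D where "D m x = ennreal (B - Fm m x)" for m x
    have incD: "incseq D"
    proof (rule incseq_SucI, rule le_funI)
      fix m x show "D m x \<le> D (Suc m) x"
        unfolding D_def Fm_def by (intro ennreal_leI) auto
    qed
    have measD: "D m \<in> borel_measurable \<mu>" for m unfolding D_def Fm_def by measurable
    have supD: "(SUP m. D m x) = ennreal (B - F x)" if x: "x \<in> \<Omega>" for x
    proof (rule antisym)
      show "(SUP m. D m x) \<le> ennreal (B - F x)"
        by (rule SUP_least) (auto simp: D_def Fm_def intro!: ennreal_leI)
      define m where "m = nat \<lceil>B - F x\<rceil>"
      have "B - real m \<le> F x" unfolding m_def by linarith
      then have "D m x = ennreal (B - F x)" unfolding D_def Fm_def by simp
      then show "ennreal (B - F x) \<le> (SUP m. D m x)" by (metis SUP_upper UNIV_I)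
    qed
    have mct: "(\<integral>\<^sup>+x. ennreal (B - F x) \<partial>\<mu>) = (SUP m. integral\<^sup>N \<mu> (D m))"
    proof -
      have "(\<integral>\<^sup>+x. ennreal (B - F x) \<partial>\<mu>) = (\<integral>\<^sup>+x. (SUP m. D m x) \<partial>\<mu>)"
        by (rule nn_integral_cong) (use supD space_mu in auto)
      also have "\<dots> = (SUP m. integral\<^sup>N \<mu> (D m))"
        by (rule nn_integral_monotone_convergence_SUP[OF incD measD])
      finally show ?thesis .
    qed
    have big: "ennreal c < (\<integral>\<^sup>+x. ennreal (B - F x) \<partial>\<mu>)"
    proof (cases "integrable \<mu> F")
      case True
      then have "ereal (integral\<^sup>L \<mu> F) < ereal r" using r unfolding eintegral_def by simp
      then have lt: "integral\<^sup>L \<mu> F < r" by simp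
      have iBF: "integrable \<mu> (\<lambda>x. B - F x)"
        using True finite_measure.integrable_const[OF fin_mu] by (intro Bochner_Integration.integrable_diff)
      have "(\<integral>\<^sup>+x. ennreal (B - F x) \<partial>\<mu>) = ennreal (integral\<^sup>L \<mu> (\<lambda>x. B - F x))"
        by (rule nn_integral_eq_integral[OF iBF]) (use B space_mu in \<open>auto intro!: AE_I2\<close>)
      also have "integral\<^sup>L \<mu> (\<lambda>x. B - F x) = m0 * B - integral\<^sup>L \<mu> F"
      proof -
        have "integral\<^sup>L \<mu> (\<lambda>x. B - F x) = integral\<^sup>L \<mu> (\<lambda>x. B) - integral\<^sup>L \<mu> F"
          by (rule Bochner_Integration.integral_diff[OF finite_measure.integrable_const[OF fin_mu] True])
        then show ?thesis using space_mu unfolding m0_def by simp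
      qed
      finally show ?thesis using lt c_def c0 by (simp add: ennreal_lessI)
    next
      case False
      have "(\<integral>\<^sup>+x. ennreal (B - F x) \<partial>\<mu>) = top"
      proof (rule ccontr)
        assume "(\<integral>\<^sup>+x. ennreal (B - F x) \<partial>\<mu>) \<noteq> top"
        then have "integrable \<mu> (\<lambda>x. B - F x)"
          by (intro integrableI_nonneg) (use B space_mu in \<open>auto intro!: AE_I2 simp: top.not_eq_extremum\<close>)
        then have "integrable \<mu> (\<lambda>x. B - (B - F x))"
          by (rule Bochner_Integration.integrable_diff[OF finite_measure.integrable_const[OF fin_mu]])
        then show False using False by simp
      qed
      then show ?thesis by simp
    qed
    then obtain m where m: "ennreal c < integral\<^sup>N \<mu> (D m)" using mct less_SUP_iff by (metis UNIV_I)
    have iBm: "integrable \<mu> (\<lambda>x. B - Fm m x)"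
      using intm finite_measure.integrable_const[OF fin_mu] by (intro Bochner_Integration.integrable_diff)
    have "integral\<^sup>N \<mu> (D m) = ennreal (integral\<^sup>L \<mu> (\<lambda>x. B - Fm m x))"
      unfolding D_def by (rule nn_integral_eq_integral[OF iBm]) (use bndm space_mu in \<open>auto intro!: AE_I2\<close>)
    also have "integral\<^sup>L \<mu> (\<lambda>x. B - Fm m x) = m0 * B - integral\<^sup>L \<mu> (Fm m)"
    proof -
      have "integral\<^sup>L \<mu> (\<lambda>x. B - Fm m x) = integral\<^sup>L \<mu> (\<lambda>x. B) - integral\<^sup>L \<mu> (Fm m)"
        by (rule Bochner_Integration.integral_diff[OF finite_measure.integrable_const[OF fin_mu] intm])
      then show ?thesis using space_mu unfolding m0_def by simp
    qed
    finally have "ennreal c < ennreal (m0 * B - integral\<^sup>L \<mu> (Fm m))" using m by simp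
    then have "c < m0 * B - integral\<^sup>L \<mu> (Fm m)" using c0 by (simp add: ennreal_less_iff)
    then show ?thesis unfolding c_def by auto
  qed
  then obtain m where m: "integral\<^sup>L \<mu> (Fm m) < r" by blast
  have e: "0 < (r - integral\<^sup>L \<mu> (Fm m)) / 2" using m by simp
  obtain h where h: "CT h" "FC h" "\<forall>x\<in>\<Omega>. Fm m x \<le> h x"
    "integral\<^sup>L \<mu> h \<le> integral\<^sup>L \<mu> (Fm m) + (r - integral\<^sup>L \<mu> (Fm m)) / 2"
    using layer_approx[OF uscm fcm bndm e] by blast
  have "\<forall>x\<in>\<Omega>. F x \<le> h x" using h(3) unfolding Fm_def by force
  moreover have "integral\<^sup>L \<mu> h < r"
  proof -
    have "(r - integral\<^sup>L \<mu> (Fm m)) / 2 < r - integral\<^sup>L \<mu> (Fm m)" using m by simp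
    then show ?thesis using h(4) by linarith
  qed
  ultimately show ?thesis using h(1,2) by blast
qed

lemma eint_le_upper:
  assumes f: "usc_fun T f"
  shows "eintegral \<mu> f \<le> upper_G_int M T e \<mu> f"
  unfolding upper_G_int_def
proof (rule Inf_greatest)
  fix z assume "z \<in> {ereal (integral\<^sup>L \<mu> g) |g. g \<in> G \<and> (\<forall>x\<in>\<Omega>. f x \<le> g x)}"
  then obtain g where g: "g \<in> G" "\<forall>x\<in>\<Omega>. f x \<le> g x" "z = ereal (integral\<^sup>L \<mu> g)" by blast
  show "eintegral \<mu> f \<le> z"
  proof (cases "integrable \<mu> f")
    case True
    have "integral\<^sup>L \<mu> f \<le> integral\<^sup>L \<mu> g"
      by (rule integral_mono[OF True int_cont[OF G_cont[OF g(1)]]]) (use g space_mu in auto)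
    then show ?thesis using True g(3) unfolding eintegral_def by simp
  next
    case False then show ?thesis unfolding eintegral_def by simp
  qed
qed

lemma pre_borel:
  assumes A: "A \<in> quot_borel_sets M T e"
  shows "{\<zeta>\<in>\<Omega>. qmap M T e \<zeta> \<in> A} \<in> borel_sets_of T"
  using A unfolding quot_borel_sets_def
proof (induction rule: sigma_sets.induct)
  case (Basic a)
  then show ?case unfolding quot_open_sets_def by (intro borel_sets_open) auto
next
  case Empty
  show ?case unfolding borel_sets_of_def using sigma_sets.Empty by simp
next
  case (Compl a)
  have "{\<zeta>\<in>\<Omega>. qmap M T e \<zeta> \<in> quot_space M T e - a} = \<Omega> - {\<zeta>\<in>\<Omega>. qmap M T e \<zeta> \<in> a}"
    unfolding quot_space_def by auto
  then show ?case using Compl.IH unfolding borel_sets_of_def by (simp add: sigma_sets.Compl)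
next
  case (Union a)
  have "{\<zeta>\<in>\<Omega>. qmap M T e \<zeta> \<in> (\<Union>i. a i)} = (\<Union>i. {\<zeta>\<in>\<Omega>. qmap M T e \<zeta> \<in> a i})" by auto
  then show ?case using Union.IH unfolding borel_sets_of_def by (simp add: sigma_sets.Union)
qed



lemma ii_to_iv:
  assumes ii: "\<And>f. CT f \<Longrightarrow> FC f \<Longrightarrow> ereal (integral\<^sup>L \<mu> f) = upper_G_int M T e \<mu> f"
    and A: "A \<in> quot_borel_sets M T e"
    and null: "emeasure \<mu> (\<Omega> - {\<zeta>\<in>\<Omega>. qmap M T e \<zeta> \<in> A}) = 0"
    and f: "usc_fun T f"
    and fib: "\<forall>\<zeta>\<in>\<Omega>. \<forall>\<omega>\<in>\<Omega>. qmap M T e \<zeta> \<in> A \<and> qmap M T e \<zeta> = qmap M T e \<omega> \<longrightarrow> f \<zeta> = f \<omega>"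
  shows "eintegral \<mu> f = upper_G_int M T e \<mu> f"
proof -
  obtain B where B: "\<forall>x\<in>\<Omega>. f x \<le> B" using usc_bounded[OF f] by blast
  define S where "S \<zeta> = {f \<omega> | \<omega>. \<omega> \<in> \<Omega> \<and> Gequiv M T e \<zeta> \<omega>}" for \<zeta>
  define fh where "fh \<zeta> = Sup (S \<zeta>)" for \<zeta>
  have bdd: "bdd_above (S \<zeta>)" for \<zeta> unfolding S_def using B by (intro bdd_aboveI[of _ B]) auto
  have ne: "S \<zeta> \<noteq> {}" if "\<zeta> \<in> \<Omega>" for \<zeta> unfolding S_def using that Gequiv_refl by blast
  have fh_ge: "f \<omega> \<le> fh \<zeta>" if "\<omega> \<in> \<Omega>" "Gequiv M T e \<zeta> \<omega>" for \<zeta> \<omega>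
    unfolding fh_def by (rule cSup_upper[OF _ bdd]) (use that in \<open>auto simp: S_def\<close>)
  have f_le: "f \<zeta> \<le> fh \<zeta>" if "\<zeta> \<in> \<Omega>" for \<zeta> using fh_ge[OF that Gequiv_refl] .
  have fh_le: "fh \<zeta> \<le> c" if "\<zeta> \<in> \<Omega>" "\<And>\<omega>. \<omega> \<in> \<Omega> \<Longrightarrow> Gequiv M T e \<zeta> \<omega> \<Longrightarrow> f \<omega> \<le> c" for \<zeta> c
    unfolding fh_def by (rule cSup_least[OF ne[OF that(1)]]) (use that in \<open>auto simp: S_def\<close>)
  have fcfh: "FC fh"
    unfolding FC_def
  proof (intro ballI impI)
    fix \<zeta> \<zeta>' assume "\<zeta> \<in> \<Omega>" "\<zeta>' \<in> \<Omega>" and eq: "Gequiv M T e \<zeta> \<zeta>'"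
    have "S \<zeta> = S \<zeta>'" unfolding S_def using eq Gequiv_sym Gequiv_trans by blast
    then show "fh \<zeta> = fh \<zeta>'" unfolding fh_def by simp
  qed
  have fh_eq: "fh \<zeta> = f \<zeta>" if z: "\<zeta> \<in> \<Omega>" "qmap M T e \<zeta> \<in> A" for \<zeta>
  proof (rule antisym[OF fh_le[OF z(1)] f_le[OF z(1)]])
    fix \<omega> assume w: "\<omega> \<in> \<Omega>" "Gequiv M T e \<zeta> \<omega>"
    then have qq: "qmap M T e \<zeta> = qmap M T e \<omega>" using qmap_eq z(1) by blast
    have "f \<zeta> = f \<omega>" using fib z(1) w(1) z(2) qq by blast
    then show "f \<omega> \<le> f \<zeta>" by simp
  qed
  have uscfh: "usc_fun T fh"
    unfolding usc_fun_def
  proof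
    fix a
    show "openin T {x \<in> \<Omega>. fh x < a}"
    proof (subst openin_subopen, intro ballI)
      fix \<zeta> assume z: "\<zeta> \<in> {x \<in> \<Omega>. fh x < a}"
      define b where "b = (fh \<zeta> + a) / 2"
      have b: "fh \<zeta> < b" "b < a" using z unfolding b_def by auto
      define C where "C = {x\<in>\<Omega>. b \<le> f x}"
      have cC: "closedin T C" unfolding C_def by (rule usc_closed[OF f])
      define U where "U = \<Omega> - sat C"
      have oU: "openin T U" unfolding U_def using sat_closed[OF cC] by blast
      have zU: "\<zeta> \<in> U"
      proof -
        have "\<zeta> \<notin> sat C"
        proof
          assume "\<zeta> \<in> sat C"
          then obtain \<omega> where "\<omega> \<in> C" "Gequiv M T e \<zeta> \<omega>" unfolding sat_def by blast
          then have "f \<omega> \<le> fh \<zeta>" "b \<le> f \<omega>" using fh_ge unfolding C_def by auto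
          then show False using b by simp
        qed
        then show ?thesis using z unfolding U_def by auto
      qed
      have "U \<subseteq> {x \<in> \<Omega>. fh x < a}"
      proof
        fix x assume x: "x \<in> U"
        then have xO: "x \<in> \<Omega>" unfolding U_def by auto
        have "fh x \<le> b"
        proof (rule fh_le[OF xO])
          fix \<omega> assume w: "\<omega> \<in> \<Omega>" "Gequiv M T e x \<omega>"
          show "f \<omega> \<le> b"
          proof (rule ccontr)
            assume "\<not> f \<omega> \<le> b"
            then have "\<omega> \<in> C" using w unfolding C_def by auto
            then have "x \<in> sat C" using w xO unfolding sat_def by blast
            then show False using x unfolding U_def by auto
          qed
        qed
        then show "x \<in> {x \<in> \<Omega>. fh x < a}" using xO b by auto
      qed
      then show "\<exists>U. openin T U \<and> \<zeta> \<in> U \<and> U \<subseteq> {x \<in> \<Omega>. fh x < a}" using oU zU by blast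
    qed
  qed
  have up_eq: "upper_G_int M T e \<mu> f = upper_G_int M T e \<mu> fh"
  proof -
    have "(\<forall>x\<in>\<Omega>. f x \<le> g x) \<longleftrightarrow> (\<forall>x\<in>\<Omega>. fh x \<le> g x)" if g: "g \<in> G" for g
    proof
      assume le: "\<forall>x\<in>\<Omega>. f x \<le> g x"
      show "\<forall>x\<in>\<Omega>. fh x \<le> g x"
      proof
        fix x assume x: "x \<in> \<Omega>"
        show "fh x \<le> g x"
        proof (rule fh_le[OF x])
          fix \<omega> assume w: "\<omega> \<in> \<Omega>" "Gequiv M T e x \<omega>"
          have gg: "g x = g \<omega>" using G_FC[OF g] x w unfolding FC_def by blast
          have "f \<omega> \<le> g \<omega>" using le w(1) by blast
          then show "f \<omega> \<le> g x" using gg by simp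
        qed
      qed
    next
      assume le: "\<forall>x\<in>\<Omega>. fh x \<le> g x"
      show "\<forall>x\<in>\<Omega>. f x \<le> g x"
      proof
        fix x assume x: "x \<in> \<Omega>"
        have "f x \<le> fh x" by (rule f_le[OF x])
        also have "fh x \<le> g x" using le x by blast
        finally show "f x \<le> g x" .
      qed
    qed
    then have "{ereal (integral\<^sup>L \<mu> g) |g. g \<in> G \<and> (\<forall>x\<in>\<Omega>. f x \<le> g x)}
        = {ereal (integral\<^sup>L \<mu> g) |g. g \<in> G \<and> (\<forall>x\<in>\<Omega>. fh x \<le> g x)}" by blast
    then show ?thesis unfolding upper_G_int_def by simp
  qed
  have eint_eq: "eintegral \<mu> f = eintegral \<mu> fh"
  proof -
    have Nb: "\<Omega> - {\<zeta>\<in>\<Omega>. qmap M T e \<zeta> \<in> A} \<in> sets \<mu>"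
      using pre_borel[OF A] unfolding sets_mu borel_sets_of_def by (rule sigma_sets.Compl)
    have nN: "\<Omega> - {\<zeta>\<in>\<Omega>. qmap M T e \<zeta> \<in> A} \<in> null_sets \<mu>" using Nb null by (intro null_setsI)
    have sub: "{x \<in> space \<mu>. \<not> f x = fh x} \<subseteq> \<Omega> - {\<zeta>\<in>\<Omega>. qmap M T e \<zeta> \<in> A}"
    proof
      fix x assume x: "x \<in> {x \<in> space \<mu>. \<not> f x = fh x}"
      then have xO: "x \<in> \<Omega>" using space_mu by simp
      have "qmap M T e x \<notin> A"
      proof
        assume "qmap M T e x \<in> A"
        then have "fh x = f x" by (rule fh_eq[OF xO])
        then show False using x by simp
      qed
      then show "x \<in> \<Omega> - {\<zeta>\<in>\<Omega>. qmap M T e \<zeta> \<in> A}" using xO by simp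
    qed
    have ae: "AE x in \<mu>. f x = fh x" by (rule AE_I'[OF nN sub])
    have m1: "f \<in> borel_measurable \<mu>" by (rule usc_meas[OF space_mu sets_mu f])
    have m2: "fh \<in> borel_measurable \<mu>" by (rule usc_meas[OF space_mu sets_mu uscfh])
    have "integrable \<mu> f \<longleftrightarrow> integrable \<mu> fh" by (rule integrable_cong_AE[OF m1 m2 ae])
    moreover have "integral\<^sup>L \<mu> f = integral\<^sup>L \<mu> fh" by (rule integral_cong_AE[OF m1 m2 ae])
    ultimately show ?thesis unfolding eintegral_def by simp
  qed
  have "upper_G_int M T e \<mu> fh \<le> eintegral \<mu> fh"
  proof (rule dense_ge)
    fix z assume z: "eintegral \<mu> fh < z"
    show "upper_G_int M T e \<mu> fh \<le> z"
    proof (cases z)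
      case (real r)
      obtain h where h: "CT h" "FC h" "\<forall>x\<in>\<Omega>. fh x \<le> h x" "integral\<^sup>L \<mu> h < r"
        using trunc_approx[OF uscfh fcfh] z real by blast
      have "upper_G_int M T e \<mu> fh \<le> upper_G_int M T e \<mu> h"
        unfolding upper_G_int_def
      proof (rule Inf_superset_mono)
        show "{ereal (integral\<^sup>L \<mu> g) |g. g \<in> G \<and> (\<forall>x\<in>\<Omega>. h x \<le> g x)}
          \<subseteq> {ereal (integral\<^sup>L \<mu> g) |g. g \<in> G \<and> (\<forall>x\<in>\<Omega>. fh x \<le> g x)}"
        proof
          fix z assume "z \<in> {ereal (integral\<^sup>L \<mu> g) |g. g \<in> G \<and> (\<forall>x\<in>\<Omega>. h x \<le> g x)}"
          then obtain g where g: "g \<in> G" "\<forall>x\<in>\<Omega>. h x \<le> g x" "z = ereal (integral\<^sup>L \<mu> g)" by blast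
          have "\<forall>x\<in>\<Omega>. fh x \<le> g x"
          proof
            fix x assume x: "x \<in> \<Omega>"
            have "fh x \<le> h x" using h(3) x by blast
            also have "h x \<le> g x" using g(2) x by blast
            finally show "fh x \<le> g x" .
          qed
          then show "z \<in> {ereal (integral\<^sup>L \<mu> g) |g. g \<in> G \<and> (\<forall>x\<in>\<Omega>. fh x \<le> g x)}" using g by blast
        qed
      qed
      also have "\<dots> = ereal (integral\<^sup>L \<mu> h)" using ii[OF h(1,2)] by simp
      also have "\<dots> \<le> z" using h(4) real by simp
      finally show ?thesis .
    next
      case PInf then show ?thesis by simp
    next
      case MInf then show ?thesis using z by simp
    qed
  qed
  then have "upper_G_int M T e \<mu> f \<le> eintegral \<mu> f" using up_eq eint_eq by simp
  then show ?thesis using eint_le_upper[OF f] by simp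
qed

end

theorem main_result:
  fixes M :: "'a::metric_space set"
    and T :: "'b topology" and e :: "'a \<times> 'a \<Rightarrow> 'b" and \<mu> :: "'b measure"
  assumes beta: "stone_cech (subtopology euclidean (Mtilde M)) T e"
    and radon: "radon_measure T \<mu>"
  shows
   "(meas_minimal M T e \<mu> \<longleftrightarrow>
      (\<forall>f\<in>Cfun T. (\<forall>\<zeta>\<in>topspace T. \<forall>\<omega>\<in>topspace T. qmap M T e \<zeta> = qmap M T e \<omega> \<longrightarrow> f \<zeta> = f \<omega>) \<longrightarrow>
          ereal (integral\<^sup>L \<mu> f) = upper_G_int M T e \<mu> f))
  \<and> (meas_minimal M T e \<mu> \<longleftrightarrow>
      (\<forall>f. usc_fun T f \<and> (\<forall>\<zeta>\<in>topspace T. \<forall>\<omega>\<in>topspace T. qmap M T e \<zeta> = qmap M T e \<omega> \<longrightarrow> f \<zeta> = f \<omega>) \<longrightarrow>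
          eintegral \<mu> f = upper_G_int M T e \<mu> f))
  \<and> (meas_minimal M T e \<mu> \<longleftrightarrow>
      (\<forall>A\<in>quot_borel_sets M T e.
         emeasure \<mu> (topspace T - {\<zeta> \<in> topspace T. qmap M T e \<zeta> \<in> A}) = 0 \<longrightarrow>
         (\<forall>f. usc_fun T f \<and>
              (\<forall>\<zeta>\<in>topspace T. \<forall>\<omega>\<in>topspace T.
                  qmap M T e \<zeta> \<in> A \<and> qmap M T e \<zeta> = qmap M T e \<omega> \<longrightarrow> f \<zeta> = f \<omega>) \<longrightarrow>
            eintegral \<mu> f = upper_G_int M T e \<mu> f)))"
proof -
  have cpt: "compact_space T" and haus: "Hausdorff_space T"
    using beta unfolding stone_cech_def by auto
  interpret S: setting M T e \<mu> using cpt haus radon by unfold_locales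
  define P1 where "P1 = meas_minimal M T e \<mu>"
  define P2 where "P2 = (\<forall>f\<in>Cfun T. (\<forall>\<zeta>\<in>topspace T. \<forall>\<omega>\<in>topspace T. qmap M T e \<zeta> = qmap M T e \<omega> \<longrightarrow> f \<zeta> = f \<omega>) \<longrightarrow>
          ereal (integral\<^sup>L \<mu> f) = upper_G_int M T e \<mu> f)"
  define P3 where "P3 = (\<forall>f. usc_fun T f \<and> (\<forall>\<zeta>\<in>topspace T. \<forall>\<omega>\<in>topspace T. qmap M T e \<zeta> = qmap M T e \<omega> \<longrightarrow> f \<zeta> = f \<omega>) \<longrightarrow>
          eintegral \<mu> f = upper_G_int M T e \<mu> f)"
  define P4 where "P4 = (\<forall>A\<in>quot_borel_sets M T e.
         emeasure \<mu> (topspace T - {\<zeta> \<in> topspace T. qmap M T e \<zeta> \<in> A}) = 0 \<longrightarrow>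
         (\<forall>f. usc_fun T f \<and>
              (\<forall>\<zeta>\<in>topspace T. \<forall>\<omega>\<in>topspace T.
                  qmap M T e \<zeta> \<in> A \<and> qmap M T e \<zeta> = qmap M T e \<omega> \<longrightarrow> f \<zeta> = f \<omega>) \<longrightarrow>
            eintegral \<mu> f = upper_G_int M T e \<mu> f))"
  have P2': "P2 \<longleftrightarrow> (\<forall>f. continuous_map T euclideanreal f \<longrightarrow> S.FC f \<longrightarrow> ereal (integral\<^sup>L \<mu> f) = upper_G_int M T e \<mu> f)"
    unfolding P2_def S.FC_iff Cfun_def by auto
  have 12: "P1 \<Longrightarrow> P2" unfolding P1_def P2' using S.i_to_ii by blast
  have 21: "P2 \<Longrightarrow> P1" unfolding P1_def P2' using S.ii_to_i by blast
  have 24: "P2 \<Longrightarrow> P4" unfolding P4_def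
  proof (intro ballI impI allI)
    fix A f
    assume p2: P2 and A: "A \<in> quot_borel_sets M T e"
      and null: "emeasure \<mu> (topspace T - {\<zeta> \<in> topspace T. qmap M T e \<zeta> \<in> A}) = 0"
      and ff: "usc_fun T f \<and> (\<forall>\<zeta>\<in>topspace T. \<forall>\<omega>\<in>topspace T.
                  qmap M T e \<zeta> \<in> A \<and> qmap M T e \<zeta> = qmap M T e \<omega> \<longrightarrow> f \<zeta> = f \<omega>)"
    show "eintegral \<mu> f = upper_G_int M T e \<mu> f"
      by (rule S.ii_to_iv[OF _ A null]) (use p2 P2' ff in auto)
  qed
  have 43: "P4 \<Longrightarrow> P3" unfolding P3_def
  proof (intro allI impI)
    fix f assume p4: P4 and ff: "usc_fun T f \<and> (\<forall>\<zeta>\<in>topspace T. \<forall>\<omega>\<in>topspace T. qmap M T e \<zeta> = qmap M T e \<omega> \<longrightarrow> f \<zeta> = f \<omega>)"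
    have Q: "quot_space M T e \<in> quot_borel_sets M T e"
      unfolding quot_borel_sets_def using sigma_sets_top .
    have "{\<zeta> \<in> topspace T. qmap M T e \<zeta> \<in> quot_space M T e} = topspace T"
      unfolding quot_space_def by auto
    then have "emeasure \<mu> (topspace T - {\<zeta> \<in> topspace T. qmap M T e \<zeta> \<in> quot_space M T e}) = 0" by simp
    then show "eintegral \<mu> f = upper_G_int M T e \<mu> f" using p4 Q ff unfolding P4_def by blast
  qed
  have 32: "P3 \<Longrightarrow> P2" unfolding P2_def
  proof (intro ballI impI)
    fix f assume p3: P3 and fC: "f \<in> Cfun T"
      and fib: "\<forall>\<zeta>\<in>topspace T. \<forall>\<omega>\<in>topspace T. qmap M T e \<zeta> = qmap M T e \<omega> \<longrightarrow> f \<zeta> = f \<omega>"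
    have cf: "continuous_map T euclideanreal f" using fC by (simp add: Cfun_def)
    have "eintegral \<mu> f = upper_G_int M T e \<mu> f" using p3 S.cont_usc[OF cf] fib unfolding P3_def by blast
    moreover have "eintegral \<mu> f = ereal (integral\<^sup>L \<mu> f)" using S.int_cont[OF cf] unfolding eintegral_def by simp
    ultimately show "ereal (integral\<^sup>L \<mu> f) = upper_G_int M T e \<mu> f" by simp
  qed
  have "(P1 \<longleftrightarrow> P2) \<and> (P1 \<longleftrightarrow> P3) \<and> (P1 \<longleftrightarrow> P4)" using 12 21 24 43 32 by blast
  then show ?thesis unfolding P1_def P2_def P3_def P4_def .
qed

theorem theorem4p1:
  fixes M :: "'a::metric_space set" and x0 :: 'a
    and T :: "'b topology" and e :: "'a \<times> 'a \<Rightarrow> 'b" and \<mu> :: "'b measure"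
  assumes complete: "complete M"
    and pointed: "x0 \<in> M"
    and three: "\<exists>x\<in>M. \<exists>y\<in>M. \<exists>z\<in>M. x \<noteq> y \<and> y \<noteq> z \<and> x \<noteq> z"
    and beta: "stone_cech (subtopology euclidean (Mtilde M)) T e"
    and radon: "radon_measure T \<mu>"
  shows
   "(meas_minimal M T e \<mu> \<longleftrightarrow>
      (\<forall>f\<in>Cfun T. (\<forall>\<zeta>\<in>topspace T. \<forall>\<omega>\<in>topspace T. qmap M T e \<zeta> = qmap M T e \<omega> \<longrightarrow> f \<zeta> = f \<omega>) \<longrightarrow>
          ereal (integral\<^sup>L \<mu> f) = upper_G_int M T e \<mu> f))
  \<and> (meas_minimal M T e \<mu> \<longleftrightarrow>
      (\<forall>f. usc_fun T f \<and> (\<forall>\<zeta>\<in>topspace T. \<forall>\<omega>\<in>topspace T. qmap M T e \<zeta> = qmap M T e \<omega> \<longrightarrow> f \<zeta> = f \<omega>) \<longrightarrow>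
          eintegral \<mu> f = upper_G_int M T e \<mu> f))
  \<and> (meas_minimal M T e \<mu> \<longleftrightarrow>
      (\<forall>A\<in>quot_borel_sets M T e.
         emeasure \<mu> (topspace T - {\<zeta> \<in> topspace T. qmap M T e \<zeta> \<in> A}) = 0 \<longrightarrow>
         (\<forall>f. usc_fun T f \<and>
              (\<forall>\<zeta>\<in>topspace T. \<forall>\<omega>\<in>topspace T.
                  qmap M T e \<zeta> \<in> A \<and> qmap M T e \<zeta> = qmap M T e \<omega> \<longrightarrow> f \<zeta> = f \<omega>) \<longrightarrow>
            eintegral \<mu> f = upper_G_int M T e \<mu> f)))"
    by (rule main_result[OF beta radon])

end
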